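(* A pseudo $J$-type algebra $\mathfrak n=\mathfrak n_{-2}\oplus\mathfrak n_{-1}$ with $\dim\mathfrak n_{-2}\geq 3$ satisfying the general $J^2$-condition is rigid.
   Context: A real graded 2-step nilpotent Lie algebra $\mathfrak n=\mathfrak n_{-2}\oplus\mathfrak n_{-1}$ has $[\mathfrak n_{-1},\mathfrak n_{-1}]=\mathfrak n_{-2}$, $\mathfrak n_{-2}$ central and equal to the center of $\mathfrak n$. A real $M$-type algebra is such an $\mathfrak n$ with a non-degenerate symmetric bilinear form $\langle\cdot,\cdot\rangle$ whose restriction to $\mathfrak n_{-2}$ is non-degenerate and with $\mathfrak n_{-2}\perp\mathfrak n_{-1}$. The $J$-map $J\colon\mathfrak n_{-2}\to\operatorname{End}(\mathfrak n_{-1})$ is defined by $\langle J_zx,y\rangle=\langle z,[x,y]\rangle$ for $x,y\in\mathfrak n_{-1}$, $z\in\mathfrak n_{-2}$. It is of pseudo $J$-type if there is an orthonormal basis $z_1,\dots,z_k$ of $\mathfrak n_{-2}$ with $J_{z_i}^2=\pm\mathrm{Id}_{\mathfrak n_{-1}}$ for each $i$. A pseudo $J$-type algebra satisfies the general $J^2$-condition if for every $x\in\mathfrak n_{-1}$ and every pair $z,z'\in\mathfrak n_{-2}$ with $\langle z,z'\rangle=0$ there exists $z''\in\mathfrak n_{-2}$ with $J_zJ_{z'}x=J_{z''}x$. The Tanaka prolongation of $\mathfrak n$ is the maximal graded Lie algebra $\hat{\mathfrak n}=\bigoplus_{i\ge -2}\hat{\mathfrak n}_i$ with negative part equal to $\mathfrak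 n$ such that for $k\ge0$ any $X\in\hat{\mathfrak n}_k$ with $[X,\mathfrak n_{-1}]=0$ is zero; $\mathfrak n$ is rigid if $\hat{\mathfrak n}$ is finite dimensional. *)

theory Defs
  imports "HOL-Analysis.Analysis"
begin

text \<open>
  A real graded 2-step nilpotent Lie algebra n = n_{-2} + n_{-1} with n_{-1} = 'v and
  n_{-2} = 'w (both finite dimensional real vector spaces) is given by its only
  nontrivial bracket component b : n_{-1} x n_{-1} -> n_{-2}; the full bracket on n
  is [(x,z),(x',z')] = (0, b x x').  Jacobi holds automatically.
\<close>

definition graded_2step :: "('v::real_vector \<Rightarrow> 'v \<Rightarrow> 'w::real_vector) \<Rightarrow> bool" where
  "graded_2step b \<longleftrightarrow>
     bilinear b \<and> (\<forall>x y. b x y = - b y x) \<and>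
     span {b x y | x y. True} = UNIV \<and>
     (\<forall>x. (\<forall>y. b x y = 0) \<longrightarrow> x = 0)"
  \<comment> \<open>bilinear skew bracket; [n_{-1},n_{-1}] = n_{-2}; centre of n equals n_{-2}\<close>

definition mtype_algebra ::
  "('v::real_vector \<Rightarrow> 'v \<Rightarrow> 'w::real_vector) \<Rightarrow> ('v \<times> 'w \<Rightarrow> 'v \<times> 'w \<Rightarrow> real) \<Rightarrow> bool" where
  "mtype_algebra b Bf \<longleftrightarrow>
     graded_2step b \<and> bilinear Bf \<and> (\<forall>p q. Bf p q = Bf q p) \<and>
     (\<forall>p. (\<forall>q. Bf p q = 0) \<longrightarrow> p = 0) \<and>
     (\<forall>z. (\<forall>z'. Bf (0, z) (0, z') = 0) \<longrightarrow> z = 0) \<and>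
     (\<forall>x z. Bf (x, 0) (0, z) = 0)"

definition Jmap ::
  "('v::real_vector \<Rightarrow> 'v \<Rightarrow> 'w::real_vector) \<Rightarrow> ('v \<times> 'w \<Rightarrow> 'v \<times> 'w \<Rightarrow> real) \<Rightarrow> 'w \<Rightarrow> 'v \<Rightarrow> 'v" where
  "Jmap b Bf z x = (THE v. \<forall>y. Bf (v, 0) (y, 0) = Bf (0, z) (0, b x y))"

definition pseudo_Jtype ::
  "('v::real_vector \<Rightarrow> 'v \<Rightarrow> 'w::real_vector) \<Rightarrow> ('v \<times> 'w \<Rightarrow> 'v \<times> 'w \<Rightarrow> real) \<Rightarrow> bool" where
  "pseudo_Jtype b Bf \<longleftrightarrow> mtype_algebra b Bf \<and>
     (\<exists>Z. independent Z \<and> span Z = UNIV \<and>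
        (\<forall>z\<in>Z. \<forall>z'\<in>Z. z \<noteq> z' \<longrightarrow> Bf (0, z) (0, z') = 0) \<and>
        (\<forall>z\<in>Z. Bf (0, z) (0, z) = 1 \<or> Bf (0, z) (0, z) = -1) \<and>
        (\<forall>z\<in>Z. (\<forall>x. Jmap b Bf z (Jmap b Bf z x) = x) \<or>
                (\<forall>x. Jmap b Bf z (Jmap b Bf z x) = - x)))"

definition general_J2_condition ::
  "('v::real_vector \<Rightarrow> 'v \<Rightarrow> 'w::real_vector) \<Rightarrow> ('v \<times> 'w \<Rightarrow> 'v \<times> 'w \<Rightarrow> real) \<Rightarrow> bool" where
  "general_J2_condition b Bf \<longleftrightarrow>
     (\<forall>x z z'. Bf (0, z) (0, z') = 0 \<longrightarrow>
        (\<exists>z''. Jmap b Bf z (Jmap b Bf z' x) = Jmap b Bf z'' x))"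

text \<open>
  An element A of degree j (j \<ge> -2) of the
  prolongation is encoded (injectively) by the multilinear map
     [y_1,...,y_{j+2}] \<mapsto> [...[[A,y_1],y_2],...,y_{j+2}] \<in> n_{-2}
  on lists of elements of n_{-1} of length j+2 (value 0 on lists of other lengths).
  tanaka_prol b m is the set of encodings of the degree m-2 component.
  Degree -2: n_{-2};  degree -1: n_{-1} (x encoded by y \<mapsto> b x y);
  degree k \<ge> 0: linear phi1 : n_{-1} \<rightarrow> g_{k-1} (here phi1 y = \<lambda>ys. T (y#ys)) that, together
  with a linear phi2 : n_{-2} \<rightarrow> g_{k-2}, forms a derivation of n of degree k, i.e.
  phi2 [x,y] = [phi1 x, y] + [x, phi1 y]  and  0 = [phi1 u, w] + [u, phi2 w]
  (the latter checked on the spanning elements w = [x,y], using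
   [A,[x,y]] = [[A,x],y] - [[A,y],x]).
\<close>
fun tanaka_prol :: "('v::real_vector \<Rightarrow> 'v \<Rightarrow> 'w::real_vector) \<Rightarrow> nat \<Rightarrow> ('v list \<Rightarrow> 'w) set" where
  "tanaka_prol b 0 = {T. \<forall>ys. ys \<noteq> [] \<longrightarrow> T ys = 0}"
| "tanaka_prol b (Suc 0) =
     {T. \<exists>x. \<forall>ys. T ys = (case ys of [y] \<Rightarrow> b x y | _ \<Rightarrow> 0)}"
| "tanaka_prol b (Suc (Suc m)) =
     {T. T [] = 0 \<and>
         (\<forall>y. (\<lambda>ys. T (y # ys)) \<in> tanaka_prol b (Suc m)) \<and>
         (\<forall>ys. linear (\<lambda>y. T (y # ys))) \<and>
         (\<exists>phi2 :: 'w \<Rightarrow> ('v list \<Rightarrow> 'w).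
            (\<forall>ys. linear (\<lambda>w. phi2 w ys)) \<and>
            (\<forall>w. phi2 w \<in> tanaka_prol b m) \<and>
            (\<forall>x y. phi2 (b x y) = (\<lambda>ys. T (x # y # ys) - T (y # x # ys))) \<and>
            (\<forall>u x y. (\<lambda>ys. T (u # x # y # ys) - T (u # y # x # ys))
                      = (\<lambda>ys. phi2 (b x y) (u # ys))))}"

text \<open>Rigid: the full prolongation (direct sum of all degrees; the encodings of different
  degrees have disjoint supports) is finite dimensional, i.e. spanned by a finite set.\<close>
definition rigid :: "('v::real_vector \<Rightarrow> 'v \<Rightarrow> 'w::real_vector) \<Rightarrow> bool" where
  "rigid b \<longleftrightarrow>
     (\<exists>Bs :: ('v list \<Rightarrow> 'w) set. finite Bs \<and>
        (\<forall>m. \<forall>T \<in> tanaka_prol b m.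
           \<exists>c. T = (\<lambda>ys. \<Sum>\<beta>\<in>Bs. c \<beta> *\<^sub>R \<beta> ys)))"

end

theory Submission
  imports Defs
begin


locale PJ =
  fixes b :: "'v::euclidean_space \<Rightarrow> 'v \<Rightarrow> 'w::euclidean_space"
    and Bf :: "'v \<times> 'w \<Rightarrow> 'v \<times> 'w \<Rightarrow> real"
  assumes PJ: "pseudo_Jtype b Bf"
begin

lemma mt: "mtype_algebra b Bf" using PJ unfolding pseudo_Jtype_def by blast
lemma g2: "graded_2step b" using mt unfolding mtype_algebra_def by blast
lemma bbil: "bilinear b" using g2 unfolding graded_2step_def by blast
lemma bskew: "b x y = - b y x" using g2 unfolding graded_2step_def by blast
lemma bspan: "span {b x y | x y. True} = UNIV" using g2 unfolding graded_2step_def by blast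
lemma bcf: "(\<And>y. b x y = 0) \<Longrightarrow> x = 0" using g2 unfolding graded_2step_def by blast
lemma Bbil: "bilinear Bf" using mt unfolding mtype_algebra_def by blast
lemma Bsym: "Bf p q = Bf q p" using mt unfolding mtype_algebra_def by blast
lemma Bnd: "(\<And>q. Bf p q = 0) \<Longrightarrow> p = 0" using mt unfolding mtype_algebra_def by blast
lemma Bwnd: "(\<And>z'. Bf (0, z) (0, z') = 0) \<Longrightarrow> z = 0" using mt unfolding mtype_algebra_def by blast
lemma Borth: "Bf (x, 0) (0, z) = 0" using mt unfolding mtype_algebra_def by blast

lemma bxx[simp]: "b x x = 0"
proof -
  have h: "b x x = - b x x" by (rule bskew)
  have "b x x + b x x = 0" by (subst h) (rule add.left_inverse)
  then have "2 *\<^sub>R b x x = 0" by (simp add: scaleR_2)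
  then show ?thesis by simp
qed
lemma b_add1: "b (x + x') y = b x y + b x' y" using bbil by (simp add: bilinear_ladd)
lemma b_add2: "b y (x + x') = b y x + b y x'" using bbil by (simp add: bilinear_radd)
lemma b_sc1: "b (c *\<^sub>R x) y = c *\<^sub>R b x y" using bbil by (simp add: bilinear_lmul)
lemma b_sc2: "b y (c *\<^sub>R x) = c *\<^sub>R b y x" using bbil by (simp add: bilinear_rmul)
lemma b_sub1: "b (x - x') y = b x y - b x' y" using bbil by (simp add: bilinear_lsub)
lemma b_sub2: "b y (x - x') = b y x - b y x'" using bbil by (simp add: bilinear_rsub)
lemma b_neg1: "b (- x) y = - b x y" using bbil by (simp add: bilinear_lneg)
lemma b_neg2: "b y (- x) = - b y x" using bbil by (simp add: bilinear_rneg)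
lemma b_01[simp]: "b 0 y = 0" using bbil by (simp add: bilinear_lzero)
lemma b_02[simp]: "b y 0 = 0" using bbil by (simp add: bilinear_rzero)
lemma lin_b2: "linear (b x)" using bbil unfolding bilinear_def by blast
lemma lin_b1: "linear (\<lambda>x. b x y)" using bbil unfolding bilinear_def by blast

definition ip :: "'v \<Rightarrow> 'v \<Rightarrow> real" where "ip x y = Bf (x, 0) (y, 0)"
definition wp :: "'w \<Rightarrow> 'w \<Rightarrow> real" where "wp z z' = Bf (0, z) (0, z')"

lemma ip_sym: "ip x y = ip y x" unfolding ip_def by (rule Bsym)
lemma wp_sym: "wp x y = wp y x" unfolding wp_def by (rule Bsym)

lemma ip_add1: "ip (x + x') y = ip x y + ip x' y"
proof -
  have "Bf ((x, 0) + (x', 0)) (y, 0) = Bf (x, 0) (y, 0) + Bf (x', 0) (y, 0)" by (rule bilinear_ladd[OF Bbil])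
  then show ?thesis unfolding ip_def by simp
qed
lemma ip_sc1: "ip (c *\<^sub>R x) y = c * ip x y"
proof -
  have "Bf (c *\<^sub>R (x, 0)) (y, 0) = c *\<^sub>R Bf (x, 0) (y, 0)" by (rule bilinear_lmul[OF Bbil])
  then show ?thesis unfolding ip_def by simp
qed
lemma ip_add2: "ip y (x + x') = ip y x + ip y x'"
  using ip_add1[of x x' y] by (simp only: ip_sym[of y "x + x'"] ip_sym[of y x] ip_sym[of y x'])
lemma ip_sc2: "ip y (c *\<^sub>R x) = c * ip y x"
  using ip_sc1[of c x y] by (simp only: ip_sym[of y "c *\<^sub>R x"] ip_sym[of y x])
lemma ip_neg1: "ip (- x) y = - ip x y" using ip_sc1[of "-1" x y] by simp
lemma ip_neg2: "ip y (- x) = - ip y x" using ip_sc2[of y "-1" x] by simp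
lemma ip_sub1: "ip (x - x') y = ip x y - ip x' y" using ip_add1[of x "-x'"] ip_neg1 by simp
lemma ip_sub2: "ip y (x - x') = ip y x - ip y x'" using ip_add2[of y x "-x'"] ip_neg2 by simp
lemma ip_01[simp]: "ip 0 y = 0" using ip_sc1[of 0 0 y] by simp
lemma ip_02[simp]: "ip y 0 = 0" using ip_sc2[of y 0 0] by simp
lemma lin_ip2: "linear (ip x)" by (rule linearI) (auto simp: ip_add2 ip_sc2)
lemma lin_ip1: "linear (\<lambda>x. ip x y)" by (rule linearI) (auto simp: ip_add1 ip_sc1)

lemma wp_add1: "wp (x + x') y = wp x y + wp x' y"
proof -
  have "Bf ((0, x) + (0, x')) (0, y) = Bf (0, x) (0, y) + Bf (0, x') (0, y)" by (rule bilinear_ladd[OF Bbil])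
  then show ?thesis unfolding wp_def by simp
qed
lemma wp_sc1: "wp (c *\<^sub>R x) y = c * wp x y"
proof -
  have "Bf (c *\<^sub>R (0, x)) (0, y) = c *\<^sub>R Bf (0, x) (0, y)" by (rule bilinear_lmul[OF Bbil])
  then show ?thesis unfolding wp_def by simp
qed
lemma wp_add2: "wp y (x + x') = wp y x + wp y x'"
  using wp_add1[of x x' y] by (simp only: wp_sym[of y "x + x'"] wp_sym[of y x] wp_sym[of y x'])
lemma wp_sc2: "wp y (c *\<^sub>R x) = c * wp y x"
  using wp_sc1[of c x y] by (simp only: wp_sym[of y "c *\<^sub>R x"] wp_sym[of y x])
lemma wp_neg1: "wp (- x) y = - wp x y" using wp_sc1[of "-1" x y] by simp
lemma wp_neg2: "wp y (- x) = - wp y x" using wp_sc2[of y "-1" x] by simp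
lemma wp_sub1: "wp (x - x') y = wp x y - wp x' y" using wp_add1[of x "-x'"] wp_neg1 by simp
lemma wp_sub2: "wp y (x - x') = wp y x - wp y x'" using wp_add2[of y x "-x'"] wp_neg2 by simp
lemma wp_01[simp]: "wp 0 y = 0" using wp_sc1[of 0 0 y] by simp
lemma wp_02[simp]: "wp y 0 = 0" using wp_sc2[of y 0 0] by simp
lemma lin_wp2: "linear (wp x)" by (rule linearI) (auto simp: wp_add2 wp_sc2)
lemma lin_wp1: "linear (\<lambda>x. wp x y)" by (rule linearI) (auto simp: wp_add1 wp_sc1)

lemma wp_nd: "(\<And>z'. wp z z' = 0) \<Longrightarrow> z = 0" unfolding wp_def by (rule Bwnd)

lemma ip_nd: assumes "\<And>y. ip v y = 0" shows "v = 0"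
proof -
  have "Bf (v, 0) q = 0" for q
  proof -
    obtain y z where q: "q = (y, 0) + (0, z)" by (cases q) simp
    have "Bf (v, 0) q = Bf (v,0) (y,0) + Bf (v,0) (0,z)" unfolding q by (rule bilinear_radd[OF Bbil])
    then show ?thesis using assms[of y] Borth[of v z] unfolding ip_def by simp
  qed
  then have "(v, 0::'w) = 0" by (rule Bnd)
  then show ?thesis by (simp add: zero_prod_def)
qed

lemma ip_expand: "ip v y = (\<Sum>e\<in>Basis. (y \<bullet> e) * ip v e)"
proof -
  have "ip v y = ip v (\<Sum>e\<in>Basis. (y \<bullet> e) *\<^sub>R e)" by (simp add: euclidean_representation)
  also have "\<dots> = (\<Sum>e\<in>Basis. ip v ((y \<bullet> e) *\<^sub>R e))" by (rule linear_sum[OF lin_ip2])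
  also have "\<dots> = (\<Sum>e\<in>Basis. (y \<bullet> e) * ip v e)" by (simp add: ip_sc2)
  finally show ?thesis .
qed

lemma lin_expand: assumes lf: "linear (f :: 'v \<Rightarrow> real)" shows "f y = (\<Sum>e\<in>Basis. (y \<bullet> e) * f e)"
proof -
  have "f y = f (\<Sum>e\<in>Basis. (y \<bullet> e) *\<^sub>R e)" by (simp add: euclidean_representation)
  also have "\<dots> = (\<Sum>e\<in>Basis. f ((y \<bullet> e) *\<^sub>R e))" by (rule linear_sum[OF lf])
  also have "\<dots> = (\<Sum>e\<in>Basis. (y \<bullet> e) * f e)" by (simp add: linear_scale[OF lf])
  finally show ?thesis .
qed

lemma riesz: assumes lf: "linear f" shows "\<exists>v. \<forall>y. ip v y = f y"
proof -
  define A where "A v = (\<Sum>e\<in>Basis. ip v e *\<^sub>R e)" for v :: 'v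
  have linA: "linear A" unfolding A_def
    by (rule linearI) (auto simp: ip_add1 ip_sc1 scaleR_add_left sum.distrib scaleR_sum_right)
  have Ae: "A v \<bullet> e = ip v e" if "e \<in> Basis" for v e
    unfolding A_def using that by (simp add: inner_sum_left_Basis)
  have "\<forall>v. A v = 0 \<longrightarrow> v = 0"
  proof (intro allI impI)
    fix v assume "A v = 0"
    then have e: "ip v e = 0" if "e \<in> Basis" for e using Ae[of e v, OF that] by simp
    have "ip v y = 0" for y using ip_expand[of v y] e by simp
    then show "v = 0" by (rule ip_nd)
  qed
  then have "inj A" using linear_injective_0[OF linA] by simp
  then have "surj A" using linear_injective_imp_surjective[OF linA] by simp
  then obtain v where v: "A v = (\<Sum>e\<in>Basis. f e *\<^sub>R e)" by (metis surj_def)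
  have e: "ip v e = f e" if "e \<in> Basis" for e
  proof -
    have "(\<Sum>e\<in>Basis. f e *\<^sub>R e) \<bullet> e = f e" using that by (simp add: inner_sum_left_Basis)
    then show ?thesis using v Ae[of e v, OF that] by simp
  qed
  have "ip v y = f y" for y
    using ip_expand[of v y] lin_expand[OF lf, of y] e by simp
  then show ?thesis by blast
qed

abbreviation J where "J \<equiv> Jmap b Bf"

lemma J_char: "ip (J z x) y = wp z (b x y)"
proof -
  have lf: "linear (\<lambda>y. wp z (b x y))"
    by (rule linearI) (auto simp: b_add2 b_sc2 wp_add2 wp_sc2)
  obtain v where v: "\<forall>y. ip v y = wp z (b x y)" using riesz[OF lf] by blast
  have ex: "\<exists>!v. \<forall>y. Bf (v, 0) (y, 0) = Bf (0, z) (0, b x y)"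
  proof (rule ex1I[of _ v])
    show "\<forall>y. Bf (v, 0) (y, 0) = Bf (0, z) (0, b x y)" using v unfolding ip_def wp_def by simp
    fix v' assume "\<forall>y. Bf (v', 0) (y, 0) = Bf (0, z) (0, b x y)"
    then have "ip (v' - v) y = 0" for y using v unfolding ip_def wp_def by (simp add: ip_sub1[unfolded ip_def])
    then show "v' = v" using ip_nd by fastforce
  qed
  have "\<forall>y. Bf (J z x, 0) (y, 0) = Bf (0, z) (0, b x y)"
    unfolding Jmap_def using theI'[OF ex] .
  then show ?thesis unfolding ip_def wp_def by simp
qed

lemma ip_eqI: "(\<And>y. ip u y = ip v y) \<Longrightarrow> u = v"
  using ip_nd[of "u - v"] by (simp add: ip_sub1)
lemma wp_eqI: "(\<And>y. wp u y = wp v y) \<Longrightarrow> u = v"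
  using wp_nd[of "u - v"] by (simp add: wp_sub1)

lemma J_add2: "J z (x + x') = J z x + J z x'"
  by (rule ip_eqI) (simp add: J_char ip_add1 b_add1 wp_add2)
lemma J_sc2: "J z (c *\<^sub>R x) = c *\<^sub>R J z x"
  by (rule ip_eqI) (simp add: J_char ip_sc1 b_sc1 wp_sc2)
lemma J_add1: "J (z + z') x = J z x + J z' x"
  by (rule ip_eqI) (simp add: J_char ip_add1 wp_add1)
lemma J_sc1: "J (c *\<^sub>R z) x = c *\<^sub>R J z x"
  by (rule ip_eqI) (simp add: J_char ip_sc1 wp_sc1)
lemma J_neg2: "J z (- x) = - J z x" using J_sc2[of z "-1" x] by simp
lemma J_sub2: "J z (x - x') = J z x - J z x'" using J_add2[of z x "-x'"] J_neg2 by simp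
lemma J_neg1: "J (- z) x = - J z x" using J_sc1[of "-1" z x] by simp
lemma J_sub1: "J (z - z') x = J z x - J z' x" using J_add1[of z "-z'" x] J_neg1 by simp
lemma J_02[simp]: "J z 0 = 0" using J_sc2[of z 0 0] by simp
lemma J_01[simp]: "J 0 x = 0" using J_sc1[of 0 0 x] by simp
lemma J_skew: "ip (J z x) y = - ip x (J z y)"
  by (simp add: J_char ip_sym[of x] bskew[of x y] wp_neg2)
lemma J_xx: "ip (J z x) x = 0" using J_char by simp

end


context PJ begin

abbreviation P where "P \<equiv> tanaka_prol b"

definition xact :: "('v list \<Rightarrow> 'w) \<Rightarrow> 'v \<Rightarrow> ('v list \<Rightarrow> 'w)" where
  "xact T y = (\<lambda>ys. T (y # ys))"

definition phi_ok :: "('v list \<Rightarrow> 'w) \<Rightarrow> ('w \<Rightarrow> 'v list \<Rightarrow> 'w) \<Rightarrow> bool" where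
  "phi_ok T phi \<longleftrightarrow> (\<forall>ys. linear (\<lambda>w. phi w ys)) \<and>
      (\<forall>x y. phi (b x y) = (\<lambda>ys. T (x # y # ys) - T (y # x # ys)))"

definition Phi2 :: "('v list \<Rightarrow> 'w) \<Rightarrow> 'w \<Rightarrow> 'v list \<Rightarrow> 'w" where
  "Phi2 T = (SOME phi. phi_ok T phi)"

lemma span_lin0: assumes "linear h" "\<And>x y. h (b x y) = 0" shows "h w = 0"
proof -
  have "w \<in> span {b x y | x y. True}" using bspan by simp
  then show ?thesis
  proof (rule linear_eq_0_on_span[OF assms(1), rotated])
    fix v assume "v \<in> {b x y | x y. True}"
    then show "h v = 0" using assms(2) by auto
  qed
qed

lemma phi_uniq: assumes "phi_ok T f" "phi_ok T g" shows "f = g"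
proof (intro ext)
  fix w ys
  have l: "linear (\<lambda>w. f w ys - g w ys)"
    using assms unfolding phi_ok_def by (intro linear_compose_sub) auto
  have "f (b x y) ys - g (b x y) ys = 0" for x y using assms unfolding phi_ok_def by simp
  then have "f w ys - g w ys = 0" using span_lin0[OF l] by blast
  then show "f w ys = g w ys" by simp
qed

lemma phi_okI: assumes ok: "phi_ok T f" shows "Phi2 T = f"
proof -
  have "phi_ok T (SOME phi. phi_ok T phi)" by (rule someI[of _ f]) (rule ok)
  then show ?thesis unfolding Phi2_def by (rule phi_uniq[OF _ ok])
qed

lemma PSS: assumes "T \<in> P (Suc (Suc m))"
  shows "T [] = 0" "\<And>y. xact T y \<in> P (Suc m)" "\<And>ys. linear (\<lambda>y. T (y # ys))"
    "phi_ok T (Phi2 T)" "\<And>w. Phi2 T w \<in> P m"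
    "\<And>u x y. (\<lambda>ys. T (u # x # y # ys) - T (u # y # x # ys)) = (\<lambda>ys. Phi2 T (b x y) (u # ys))"
proof -
  from assms obtain phi where ph: "\<forall>ys. linear (\<lambda>w. phi w ys)" "\<forall>w. phi w \<in> P m"
    "\<forall>x y. phi (b x y) = (\<lambda>ys. T (x # y # ys) - T (y # x # ys))"
    "\<forall>u x y. (\<lambda>ys. T (u # x # y # ys) - T (u # y # x # ys)) = (\<lambda>ys. phi (b x y) (u # ys))"
    by auto
  have ok: "phi_ok T phi" using ph unfolding phi_ok_def by blast
  then have e: "Phi2 T = phi" by (rule phi_okI)
  show "phi_ok T (Phi2 T)" using ok e by simp
  show "\<And>w. Phi2 T w \<in> P m" using ph e by simp
  show "\<And>u x y. (\<lambda>ys. T (u # x # y # ys) - T (u # y # x # ys)) = (\<lambda>ys. Phi2 T (b x y) (u # ys))"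
    unfolding e using ph(4) by blast
  show "T [] = 0" using assms by simp
  show "\<And>y. xact T y \<in> P (Suc m)" using assms unfolding xact_def by simp
  show "\<And>ys. linear (\<lambda>y. T (y # ys))" using assms by simp
qed

lemma Phi2_lin: "T \<in> P (Suc (Suc m)) \<Longrightarrow> linear (\<lambda>w. Phi2 T w ys)"
  using PSS(4) unfolding phi_ok_def by blast
lemma Phi2_b: "T \<in> P (Suc (Suc m)) \<Longrightarrow> Phi2 T (b x y) = (\<lambda>ys. T (x # y # ys) - T (y # x # ys))"
  using PSS(4) unfolding phi_ok_def by blast

definition v1 :: "'v \<Rightarrow> 'v list \<Rightarrow> 'w" where
  "v1 x = (\<lambda>ys. case ys of [y] \<Rightarrow> b x y | _ \<Rightarrow> 0)"

lemma P1_iff: "T \<in> P (Suc 0) \<longleftrightarrow> (\<exists>x. T = v1 x)"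
  unfolding v1_def by (auto simp: fun_eq_iff)

lemma v1_inj: "v1 x = v1 x' \<Longrightarrow> x = x'"
proof -
  assume "v1 x = v1 x'"
  then have "v1 x [y] = v1 x' [y]" for y by simp
  then have "b x y = b x' y" for y unfolding v1_def by simp
  then have "b (x - x') y = 0" for y by (simp add: b_sub1)
  then show "x = x'" using bcf[of "x - x'"] by simp
qed

lemma v1_zero: "v1 0 = (\<lambda>_. 0)" unfolding v1_def by (auto simp: fun_eq_iff split: list.split)

definition vec :: "('v list \<Rightarrow> 'w) \<Rightarrow> 'v" where "vec T = (SOME x. T = v1 x)"

lemma vec: "T \<in> P (Suc 0) \<Longrightarrow> T = v1 (vec T)"
  unfolding vec_def P1_iff by (rule someI_ex)

lemma P0_iff: "T \<in> P 0 \<longleftrightarrow> (\<forall>ys. ys \<noteq> [] \<longrightarrow> T ys = 0)" by simp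

lemma PS: assumes "T \<in> P (Suc m)"
  shows "T [] = 0" "\<And>y. xact T y \<in> P m" "\<And>ys. linear (\<lambda>y. T (y # ys))"
proof -
  have "T [] = 0 \<and> (\<forall>y. xact T y \<in> P m) \<and> (\<forall>ys. linear (\<lambda>y. T (y # ys)))"
  proof (cases m)
    case 0
    then obtain x where T: "T = v1 x" using assms P1_iff by auto
    have l: "linear (\<lambda>y. T (y # ys))" for ys
    proof (cases ys)
      case Nil then show ?thesis unfolding T v1_def by (simp add: lin_b2)
    next
      case (Cons a list) then show ?thesis unfolding T v1_def by (simp add: linear_zero)
    qed
    have x: "xact T y \<in> P 0" for y
      unfolding P0_iff
    proof (intro allI impI)
      fix ys :: "'v list" assume "ys \<noteq> []"
      then obtain a l where "ys = a # l" by (cases ys) auto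
      then show "xact T y ys = 0" unfolding T v1_def xact_def by simp
    qed
    have "T [] = 0" unfolding T v1_def by simp
    then show ?thesis using l x 0 by blast
  next
    case (Suc k)
    have T: "T \<in> P (Suc (Suc k))" using assms Suc by simp
    show ?thesis using PSS(1)[OF T] PSS(2)[OF T] PSS(3)[OF T] Suc by blast
  qed
  then show "T [] = 0" "\<And>y. xact T y \<in> P m" "\<And>ys. linear (\<lambda>y. T (y # ys))" by auto
qed

lemma zero_of_xact: assumes "T \<in> P (Suc m)" "\<And>y. xact T y = (\<lambda>_. 0)" shows "T = (\<lambda>_. 0)"
proof
  fix ys show "T ys = 0"
  proof (cases ys)
    case Nil then show ?thesis using PS(1)[OF assms(1)] by simp
  next
    case (Cons y ys')
    have "xact T y ys' = 0" using assms(2)[of y] by simp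
    then show ?thesis by (simp add: xact_def Cons)
  qed
qed

lemma P_lin: "T1 \<in> P n \<Longrightarrow> T2 \<in> P n \<Longrightarrow> (\<lambda>ys. T1 ys + c *\<^sub>R T2 ys) \<in> P n"
proof (induction n arbitrary: T1 T2 c rule: less_induct)
  case (less n)
  show ?case
  proof (cases n)
    case 0 then show ?thesis using less.prems by simp
  next
    case (Suc k)
    show ?thesis
    proof (cases k)
      case 0
      then obtain x1 x2 where "T1 = v1 x1" "T2 = v1 x2" using less.prems Suc P1_iff by auto
      then have "(\<lambda>ys. T1 ys + c *\<^sub>R T2 ys) = v1 (x1 + c *\<^sub>R x2)"
        unfolding v1_def by (auto simp: fun_eq_iff b_add1 b_sc1 split: list.split)
      then show ?thesis using Suc 0 P1_iff by auto
    next
      case (Suc m)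
      have n: "n = Suc (Suc m)" using \<open>n = Suc k\<close> Suc by simp
      note A1 = PSS[OF less.prems(1)[unfolded n]] and A2 = PSS[OF less.prems(2)[unfolded n]]
      define phi where "phi w = (\<lambda>ys. Phi2 T1 w ys + c *\<^sub>R Phi2 T2 w ys)" for w
      have IH1: "(\<lambda>ys. S1 ys + c *\<^sub>R S2 ys) \<in> P (Suc m)" if "S1 \<in> P (Suc m)" "S2 \<in> P (Suc m)" for S1 S2
        using less.IH[of "Suc m"] n that by simp
      have IH0: "(\<lambda>ys. S1 ys + c *\<^sub>R S2 ys) \<in> P m" if "S1 \<in> P m" "S2 \<in> P m" for S1 S2
        using less.IH[of m] n that by simp
      have "(\<lambda>ys. T1 ys + c *\<^sub>R T2 ys) [] = 0" using A1(1) A2(1) by simp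
      moreover have "\<forall>y. (\<lambda>ys. (\<lambda>ys. T1 ys + c *\<^sub>R T2 ys) (y # ys)) \<in> P (Suc m)"
        using IH1[OF A1(2) A2(2)] unfolding xact_def by simp
      moreover have "\<forall>ys. linear (\<lambda>y. (\<lambda>ys. T1 ys + c *\<^sub>R T2 ys) (y # ys))"
        using A1(3) A2(3) by (auto intro!: linear_compose_add linear_compose_scale_right)
      moreover have "(\<forall>ys. linear (\<lambda>w. phi w ys))"
        unfolding phi_def using A1(4) A2(4) unfolding phi_ok_def
        by (auto intro!: linear_compose_add linear_compose_scale_right)
      moreover have "\<forall>w. phi w \<in> P m" unfolding phi_def using IH0 A1(5) A2(5) by simp
      moreover have "\<forall>x y. phi (b x y) = (\<lambda>ys. (\<lambda>ys. T1 ys + c *\<^sub>R T2 ys) (x # y # ys) - (\<lambda>ys. T1 ys + c *\<^sub>R T2 ys) (y # x # ys))"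
      proof (intro allI)
        fix x y
        have h1: "Phi2 T1 (b x y) ys = T1 (x # y # ys) - T1 (y # x # ys)" for ys
          using Phi2_b[OF less.prems(1)[unfolded n]] by simp
        have h2: "Phi2 T2 (b x y) ys = T2 (x # y # ys) - T2 (y # x # ys)" for ys
          using Phi2_b[OF less.prems(2)[unfolded n]] by simp
        show "phi (b x y) = (\<lambda>ys. (\<lambda>ys. T1 ys + c *\<^sub>R T2 ys) (x # y # ys) - (\<lambda>ys. T1 ys + c *\<^sub>R T2 ys) (y # x # ys))"
          unfolding phi_def fun_eq_iff h1 h2 by (simp add: algebra_simps)
      qed
      moreover have "\<forall>u x y. (\<lambda>ys. (\<lambda>ys. T1 ys + c *\<^sub>R T2 ys) (u # x # y # ys) - (\<lambda>ys. T1 ys + c *\<^sub>R T2 ys) (u # y # x # ys)) = (\<lambda>ys. phi (b x y) (u # ys))"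
      proof (intro allI)
        fix u x y
        have "T1 (u # x # y # ys) - T1 (u # y # x # ys) = Phi2 T1 (b x y) (u # ys)" for ys
          using fun_cong[OF A1(6)[of u x y], of ys] by simp
        moreover have "T2 (u # x # y # ys) - T2 (u # y # x # ys) = Phi2 T2 (b x y) (u # ys)" for ys
          using fun_cong[OF A2(6)[of u x y], of ys] by simp
        ultimately show "(\<lambda>ys. (\<lambda>ys. T1 ys + c *\<^sub>R T2 ys) (u # x # y # ys) - (\<lambda>ys. T1 ys + c *\<^sub>R T2 ys) (u # y # x # ys)) = (\<lambda>ys. phi (b x y) (u # ys))"
          unfolding phi_def by (auto simp: fun_eq_iff algebra_simps)
      qed
      ultimately show ?thesis unfolding n tanaka_prol.simps by blast
    qed
  qed
qed

lemma P_zero: "(\<lambda>_. 0) \<in> P n"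
proof (induction n rule: less_induct)
  case (less n)
  show ?case
  proof (cases n)
    case 0 then show ?thesis by simp
  next
    case (Suc k)
    show ?thesis
    proof (cases k)
      case 0
      have "\<exists>x. (\<lambda>_. 0::'w) = v1 x" by (rule exI[of _ 0]) (simp add: v1_zero)
      then show ?thesis using Suc 0 P1_iff by simp
    next
      case (Suc m)
      have n: "n = Suc (Suc m)" using \<open>n = Suc k\<close> Suc by simp
      have "(\<lambda>_. 0) \<in> P (Suc m)" "(\<lambda>_. 0) \<in> P m" using less.IH n by auto
      then show ?thesis unfolding n tanaka_prol.simps
        by (intro CollectI conjI allI exI[of _ "\<lambda>w ys. 0"]) (auto simp: linear_zero fun_eq_iff)
    qed
  qed
qed

lemma P_sub: "T1 \<in> P n \<Longrightarrow> T2 \<in> P n \<Longrightarrow> (\<lambda>ys. T1 ys - T2 ys) \<in> P n"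
  using P_lin[of T1 n T2 "-1"] by simp
lemma P_scale: "T \<in> P n \<Longrightarrow> (\<lambda>ys. c *\<^sub>R T ys) \<in> P n"
  using P_lin[of "\<lambda>_. 0" n T c] P_zero by simp
lemma P_add: "T1 \<in> P n \<Longrightarrow> T2 \<in> P n \<Longrightarrow> (\<lambda>ys. T1 ys + T2 ys) \<in> P n"
  using P_lin[of T1 n T2 1] by simp

lemma Phi2_linT: assumes "T1 \<in> P (Suc (Suc m))" "T2 \<in> P (Suc (Suc m))"
  shows "Phi2 (\<lambda>ys. T1 ys + c *\<^sub>R T2 ys) = (\<lambda>w ys. Phi2 T1 w ys + c *\<^sub>R Phi2 T2 w ys)"
proof (rule phi_okI)
  note A1 = PSS(4)[OF assms(1)] and A2 = PSS(4)[OF assms(2)]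
  show "phi_ok (\<lambda>ys. T1 ys + c *\<^sub>R T2 ys) (\<lambda>w ys. Phi2 T1 w ys + c *\<^sub>R Phi2 T2 w ys)"
    unfolding phi_ok_def
  proof (intro conjI allI)
    fix ys show "linear (\<lambda>w. Phi2 T1 w ys + c *\<^sub>R Phi2 T2 w ys)"
      using A1 A2 unfolding phi_ok_def by (auto intro!: linear_compose_add linear_compose_scale_right)
  next
    fix x y
    have h1: "Phi2 T1 (b x y) ys = T1 (x # y # ys) - T1 (y # x # ys)" for ys
      using Phi2_b[OF assms(1)] by simp
    have h2: "Phi2 T2 (b x y) ys = T2 (x # y # ys) - T2 (y # x # ys)" for ys
      using Phi2_b[OF assms(2)] by simp
    show "(\<lambda>ys. Phi2 T1 (b x y) ys + c *\<^sub>R Phi2 T2 (b x y) ys) = (\<lambda>ys. (\<lambda>ys. T1 ys + c *\<^sub>R T2 ys) (x # y # ys) - (\<lambda>ys. T1 ys + c *\<^sub>R T2 ys) (y # x # ys))"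
      unfolding fun_eq_iff h1 h2 by (simp add: algebra_simps)
  qed
qed

lemma Phi2_subT: assumes "T1 \<in> P (Suc (Suc m))" "T2 \<in> P (Suc (Suc m))"
  shows "Phi2 (\<lambda>ys. T1 ys - T2 ys) w = (\<lambda>ys. Phi2 T1 w ys - Phi2 T2 w ys)"
  using Phi2_linT[OF assms, of "-1"] by (simp add: fun_eq_iff)

lemma Phi2_linw: assumes "T \<in> P (Suc (Suc m))"
  shows "Phi2 T (w1 + c *\<^sub>R w2) = (\<lambda>ys. Phi2 T w1 ys + c *\<^sub>R Phi2 T w2 ys)"
proof (rule ext)
  fix ys
  have l: "linear (\<lambda>w. Phi2 T w ys)" by (rule Phi2_lin[OF assms])
  show "Phi2 T (w1 + c *\<^sub>R w2) ys = Phi2 T w1 ys + c *\<^sub>R Phi2 T w2 ys"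
    using linear_add[OF l, of w1 "c *\<^sub>R w2"] linear_scale[OF l, of c w2] by simp
qed

lemma E2: assumes "T \<in> P (Suc (Suc (Suc m)))"
  shows "Phi2 (xact T u) w = xact (Phi2 T w) u"
proof -
  have xT: "xact T u \<in> P (Suc (Suc m))" using PSS(2)[OF assms] .
  have "phi_ok (xact T u) (\<lambda>w. xact (Phi2 T w) u)"
    unfolding phi_ok_def
  proof (intro conjI allI)
    fix ys show "linear (\<lambda>w. xact (Phi2 T w) u ys)" unfolding xact_def using Phi2_lin[OF assms] .
  next
    fix x y show "xact (Phi2 T (b x y)) u = (\<lambda>ys. xact T u (x # y # ys) - xact T u (y # x # ys))"
      using PSS(6)[OF assms, of u x y] unfolding xact_def by simp
  qed
  then show ?thesis by (simp add: phi_okI)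
qed

lemma E3: assumes "T \<in> P (Suc (Suc (Suc (Suc m))))"
  shows "Phi2 (Phi2 T w) w' = Phi2 (Phi2 T w') w"
proof -
  have Tw: "Phi2 T w \<in> P (Suc (Suc m))" using PSS(5)[OF assms] .
  have Tw': "\<And>w. Phi2 T w \<in> P (Suc (Suc m))" using PSS(5)[OF assms] .
  have xT: "\<And>x. xact T x \<in> P (Suc (Suc (Suc m)))" using PSS(2)[OF assms] .
  have xxT: "\<And>x y. xact (xact T x) y \<in> P (Suc (Suc m))" using PSS(2)[OF xT] .
  have ok: "phi_ok (Phi2 T w) (\<lambda>w'. Phi2 (Phi2 T w') w)"
    unfolding phi_ok_def
  proof (intro conjI allI)
    fix ys show "linear (\<lambda>w'. Phi2 (Phi2 T w') w ys)"
    proof (rule linearI)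
      fix w1 w2
      have "Phi2 (Phi2 T (w1 + w2)) w ys = Phi2 (\<lambda>ys. Phi2 T w1 ys + 1 *\<^sub>R Phi2 T w2 ys) w ys"
        using Phi2_linw[OF assms, of w1 1 w2] by simp
      also have "\<dots> = Phi2 (Phi2 T w1) w ys + Phi2 (Phi2 T w2) w ys"
        using Phi2_linT[OF Tw' Tw', of w1 1 w2] by simp
      finally show "Phi2 (Phi2 T (w1 + w2)) w ys = Phi2 (Phi2 T w1) w ys + Phi2 (Phi2 T w2) w ys" .
    next
      fix r w1
      have "Phi2 (Phi2 T (r *\<^sub>R w1)) w ys = Phi2 (\<lambda>ys. Phi2 T 0 ys + r *\<^sub>R Phi2 T w1 ys) w ys"
        using Phi2_linw[OF assms, of 0 r w1] by simp
      also have "\<dots> = Phi2 (Phi2 T 0) w ys + r *\<^sub>R Phi2 (Phi2 T w1) w ys"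
        using Phi2_linT[OF Tw' Tw', of 0 r w1] by simp
      also have "Phi2 T 0 = (\<lambda>_. 0)"
      proof (rule ext)
        fix ys show "Phi2 T 0 ys = 0" using linear_0[OF Phi2_lin[OF assms, of ys]] by simp
      qed
      also have "Phi2 (\<lambda>_. 0) w ys = 0"
      proof -
        have "Phi2 (\<lambda>ys. (\<lambda>_. 0) ys - (\<lambda>_. 0) ys) w = (\<lambda>ys. Phi2 (\<lambda>_. 0) w ys - Phi2 (\<lambda>_. 0) w ys)"
          by (rule Phi2_subT[OF P_zero P_zero])
        then show ?thesis by (simp add: fun_eq_iff)
      qed
      finally show "Phi2 (Phi2 T (r *\<^sub>R w1)) w ys = r *\<^sub>R Phi2 (Phi2 T w1) w ys" by simp
    qed
  next
    fix x y
    have a: "Phi2 T w (x # y # ys) = Phi2 (xact (xact T x) y) w ys" for x y ys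
    proof -
      have "Phi2 T w (x # y # ys) = xact (xact (Phi2 T w) x) y ys" unfolding xact_def by simp
      also have "xact (Phi2 T w) x = Phi2 (xact T x) w" using E2[OF assms] by simp
      also have "xact (Phi2 (xact T x) w) y = Phi2 (xact (xact T x) y) w" using E2[OF xT] by simp
      finally show ?thesis .
    qed
    have "Phi2 (Phi2 T (b x y)) w = Phi2 (\<lambda>ys. xact (xact T x) y ys - xact (xact T y) x ys) w"
      using Phi2_b[OF assms, of x y] unfolding xact_def by simp
    also have "\<dots> = (\<lambda>ys. Phi2 (xact (xact T x) y) w ys - Phi2 (xact (xact T y) x) w ys)"
      by (rule Phi2_subT[OF xxT xxT])
    also have "\<dots> = (\<lambda>ys. Phi2 T w (x # y # ys) - Phi2 T w (y # x # ys))" using a by simp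
    finally show "Phi2 (Phi2 T (b x y)) w = (\<lambda>ys. Phi2 T w (x # y # ys) - Phi2 T w (y # x # ys))" .
  qed
  show ?thesis using fun_cong[OF phi_okI[OF ok], of w'] by simp
qed

end


locale PJ3 = PJ b Bf
  for b :: "'v::euclidean_space \<Rightarrow> 'v \<Rightarrow> 'w::euclidean_space"
    and Bf :: "'v \<times> 'w \<Rightarrow> 'v \<times> 'w \<Rightarrow> real" +
  assumes dim3: "DIM('w) \<ge> 3"
    and J2c: "general_J2_condition b Bf"
begin

definition Zprop :: "'w set \<Rightarrow> bool" where
  "Zprop Z \<longleftrightarrow> independent Z \<and> span Z = UNIV \<and>
        (\<forall>z\<in>Z. \<forall>z'\<in>Z. z \<noteq> z' \<longrightarrow> Bf (0, z) (0, z') = 0) \<and>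
        (\<forall>z\<in>Z. Bf (0, z) (0, z) = 1 \<or> Bf (0, z) (0, z) = -1) \<and>
        (\<forall>z\<in>Z. (\<forall>x. J z (J z x) = x) \<or> (\<forall>x. J z (J z x) = - x))"

definition Zs where "Zs = (SOME Z. Zprop Z)"

lemma Zs: "Zprop Zs"
proof -
  have "\<exists>Z. Zprop Z" using PJ unfolding pseudo_Jtype_def Zprop_def by blast
  then show ?thesis unfolding Zs_def by (rule someI_ex)
qed

lemma Zs_ind: "independent Zs" using Zs unfolding Zprop_def by blast
lemma Zs_span: "span Zs = UNIV" using Zs unfolding Zprop_def by blast
lemma Zs_orth: "z \<in> Zs \<Longrightarrow> z' \<in> Zs \<Longrightarrow> z \<noteq> z' \<Longrightarrow> wp z z' = 0"
  using Zs unfolding Zprop_def wp_def by blast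
lemma Zs_fin: "finite Zs" using independent_bound[OF Zs_ind] by blast
lemma Zs_card: "card Zs \<ge> 3"
proof -
  have "card Zs = dim Zs" using dim_eq_card_independent[OF Zs_ind] by simp
  also have "\<dots> = dim (span Zs)" by (simp add: dim_span)
  also have "\<dots> = DIM('w)" using Zs_span by (simp add: dim_UNIV)
  finally show ?thesis using dim3 by simp
qed

definition eps :: "'w \<Rightarrow> real" where "eps z = wp z z"
definition sig :: "'w \<Rightarrow> real" where "sig z = (if (\<forall>x. J z (J z x) = x) then 1 else -1)"

lemma eps_pm: "z \<in> Zs \<Longrightarrow> eps z = 1 \<or> eps z = -1"
  using Zs unfolding Zprop_def eps_def wp_def by blast
lemma eps_sq: assumes "z \<in> Zs" shows "eps z * eps z = 1" using eps_pm[OF assms] by auto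
lemma sig_pm: "sig z = 1 \<or> sig z = -1" unfolding sig_def by auto
lemma sig_sq: "sig z * sig z = 1" using sig_pm[of z] by auto
lemma JJ: "z \<in> Zs \<Longrightarrow> J z (J z x) = sig z *\<^sub>R x"
  using Zs unfolding Zprop_def sig_def by (cases "\<forall>x. J z (J z x) = x") auto

lemma lin0_Zs: assumes "linear h" "\<And>z. z \<in> Zs \<Longrightarrow> h z = 0" shows "h w = 0"
proof -
  have "w \<in> span Zs" using Zs_span by simp
  then show ?thesis by (rule linear_eq_0_on_span[OF assms(1), rotated]) (rule assms(2))
qed

lemma wp_nd_Z: assumes "\<And>z. z \<in> Zs \<Longrightarrow> wp z w = 0" shows "w = 0"
proof (rule wp_nd)
  fix z' show "wp w z' = 0"
    using lin0_Zs[OF lin_wp1[of w], of z'] assms by (simp add: wp_sym[of _ w])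
qed

lemma ip_xx_0: "ip (J z x) x = 0" by (rule J_xx)

lemma K_xx: assumes "wp z z' = 0" shows "ip (J z (J z' x)) x = 0"
proof -
  obtain z'' where "J z (J z' x) = J z'' x" using J2c assms unfolding general_J2_condition_def wp_def by blast
  then show ?thesis using J_xx by simp
qed

lemma anticomm: assumes "z \<in> Zs" "z' \<in> Zs" "z \<noteq> z'" shows "J z (J z' x) = - J z' (J z x)"
proof -
  have o: "wp z z' = 0" using Zs_orth assms by blast
  have "ip (J z (J z' x) + J z' (J z x)) y = 0" for y
  proof -
    have "ip (J z (J z' (x + y))) (x + y) = 0" by (rule K_xx[OF o])
    then have "ip (J z (J z' x)) x + ip (J z (J z' x)) y + ip (J z (J z' y)) x + ip (J z (J z' y)) y = 0"
      by (simp add: J_add2 ip_add1 ip_add2)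
    then have e: "ip (J z (J z' x)) y + ip (J z (J z' y)) x = 0" using K_xx[OF o, of x] K_xx[OF o, of y] by simp
    have "ip (J z (J z' y)) x = ip (J z' (J z x)) y"
      using J_skew[of z "J z' y" x] J_skew[of z' y "J z x"] ip_sym[of "J z x" "J z' y"] ip_sym[of y] by simp
    then show ?thesis using e by (simp add: ip_add1)
  qed
  then have "J z (J z' x) + J z' (J z x) = 0" by (rule ip_nd)
  then show ?thesis by (simp add: eq_neg_iff_add_eq_0)
qed

lemma nonnull: "\<exists>x. ip x x \<noteq> 0"
proof (rule ccontr)
  assume "\<not> ?thesis"
  then have h: "ip x x = 0" for x by simp
  have "ip x y = 0" for x y
  proof -
    have "ip (x + y) (x + y) = ip x x + ip x y + ip y x + ip y y" by (simp add: ip_add1 ip_add2)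
    then show ?thesis using h[of "x+y"] h[of x] h[of y] ip_sym[of y x] by simp
  qed
  then have "x = 0" for x :: 'v using ip_nd by blast
  moreover obtain e :: 'v where "e \<in> Basis" using nonempty_Basis by blast
  ultimately show False using nonzero_Basis by blast
qed

lemma sig_eps_const: assumes "z \<in> Zs" "z' \<in> Zs" shows "sig z * eps z = sig z' * eps z'"
proof (cases "z = z'")
  case True then show ?thesis by simp
next
  case False
  define c where "c = eps z * eps z'"
  have o: "wp z z' = 0" "wp z' z = 0" using Zs_orth assms False by (auto simp: wp_sym)
  have "wp (z + z') (z - c *\<^sub>R z') = eps z - c * eps z'"
    using o by (simp add: wp_add1 wp_sub2 wp_sc2 eps_def)
  also have "\<dots> = 0" unfolding c_def using eps_sq[OF assms(2)] by (simp add: mult.assoc)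
  finally have o2: "wp (z + z') (z - c *\<^sub>R z') = 0" .
  obtain x where x: "ip x x \<noteq> 0" using nonnull by blast
  have "ip (J (z + z') (J (z - c *\<^sub>R z') x)) x = 0" by (rule K_xx[OF o2])
  moreover have "J (z + z') (J (z - c *\<^sub>R z') x) =
      J z (J z x) - c *\<^sub>R J z (J z' x) + J z' (J z x) - c *\<^sub>R J z' (J z' x)"
    by (simp add: J_add1 J_sub1 J_sc1 J_add2 J_sub2 J_sc2 algebra_simps)
  moreover have "ip (J z (J z' x)) x = 0" using K_xx o by simp
  moreover have "ip (J z' (J z x)) x = 0" using K_xx o by (simp add: wp_sym)
  ultimately have "sig z * ip x x - c * sig z' * ip x x = 0"
    using JJ[OF assms(1)] JJ[OF assms(2)] by (simp add: ip_add1 ip_sub1 ip_sc1)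
  then have "sig z = c * sig z'" using x by (simp add: algebra_simps)
  then have "sig z * eps z = eps z * eps z * (eps z' * sig z')" unfolding c_def by (simp add: algebra_simps)
  then show ?thesis using eps_sq[OF assms(1)] by (simp add: algebra_simps)
qed

definition z0 where "z0 = (SOME z. z \<in> Zs)"
lemma z0: "z0 \<in> Zs"
proof -
  have "Zs \<noteq> {}" using Zs_card by auto
  then show ?thesis unfolding z0_def by (simp add: some_in_eq)
qed
definition kap where "kap = sig z0 * eps z0"
lemma kap: "z \<in> Zs \<Longrightarrow> sig z * eps z = kap" unfolding kap_def using sig_eps_const[OF _ z0] by simp
lemma kap_pm: "kap = 1 \<or> kap = -1" unfolding kap_def using sig_pm[of z0] eps_pm[OF z0] by auto

lemma wp_eqI_Z: assumes "\<And>k. k \<in> Zs \<Longrightarrow> wp k u = wp k v" shows "u = v"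
proof -
  have "u - v = 0" by (rule wp_nd_Z) (simp add: wp_sub2 assms)
  then show ?thesis by simp
qed

lemma Cid: assumes z: "z \<in> Zs" shows "b (J z x) y - b x (J z y) = (2 * kap * ip x y) *\<^sub>R z"
proof (rule wp_eqI_Z)
  fix k assume k: "k \<in> Zs"
  have s: "ip (J k x) (J z y) = - ip (J z (J k x)) y"
    using J_skew[of z "J k x" y] ip_sym[of "J k x"] by simp
  have lhs: "wp k (b (J z x) y - b x (J z y)) = ip (J k (J z x) + J z (J k x)) y"
    by (simp add: wp_sub2 J_char[symmetric] ip_add1 s)
  show "wp k (b (J z x) y - b x (J z y)) = wp k ((2 * kap * ip x y) *\<^sub>R z)"
  proof (cases "k = z")
    case True
    have "kap * eps z = sig z" using kap[OF z] eps_sq[OF z] by (metis mult.assoc mult.right_neutral)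
    then have e: "2 * kap * ip x y * eps z = 2 * sig z * ip x y" by (simp add: algebra_simps)
    have "ip (J k (J z x) + J z (J k x)) y = 2 * sig z * ip x y"
      using True JJ[OF z] by (simp add: ip_add1 ip_sc1)
    moreover have "wp k ((2 * kap * ip x y) *\<^sub>R z) = 2 * kap * ip x y * eps z"
      using True by (simp add: wp_sc2 eps_def)
    ultimately show ?thesis unfolding lhs using e by simp
  next
    case False
    then show ?thesis unfolding lhs using anticomm[OF k z False] Zs_orth[OF k z False] by (simp add: wp_sc2)
  qed
qed

end


context PJ3 begin

definition Nm :: "('v list \<Rightarrow> 'w) \<Rightarrow> 'v \<Rightarrow> 'v" where "Nm D y = vec (xact D y)"
definition Lm :: "('v list \<Rightarrow> 'w) \<Rightarrow> 'w \<Rightarrow> 'w" where "Lm D w = Phi2 D w []"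

lemma D2_val: assumes "D \<in> P (Suc (Suc 0))" shows "D [y, y'] = b (Nm D y) y'"
proof -
  have "xact D y \<in> P (Suc 0)" using PSS(2)[OF assms] .
  then have "xact D y = v1 (Nm D y)" unfolding Nm_def by (rule vec)
  then have "xact D y [y'] = v1 (Nm D y) [y']" by simp
  then show ?thesis unfolding xact_def v1_def by simp
qed

lemma Nm_lin: assumes D: "D \<in> P (Suc (Suc 0))" shows "Nm D (x + c *\<^sub>R x') = Nm D x + c *\<^sub>R Nm D x'"
proof -
  have l: "linear (\<lambda>y. D (y # [y']))" for y' using PSS(3)[OF D] .
  have "b (Nm D (x + c *\<^sub>R x') - (Nm D x + c *\<^sub>R Nm D x')) y' = 0" for y'
  proof -
    have "D [x + c *\<^sub>R x', y'] = D [x, y'] + c *\<^sub>R D [x', y']"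
      using linear_add[OF l[of y'], of x "c *\<^sub>R x'"] linear_scale[OF l[of y'], of c x'] by simp
    then show ?thesis using D2_val[OF D] by (simp add: b_sub1 b_add1 b_sc1)
  qed
  then show ?thesis using bcf by fastforce
qed

lemma Nm_add: "D \<in> P (Suc (Suc 0)) \<Longrightarrow> Nm D (x + x') = Nm D x + Nm D x'"
  using Nm_lin[of D x 1 x'] by simp
lemma Nm_sc: "D \<in> P (Suc (Suc 0)) \<Longrightarrow> Nm D (c *\<^sub>R x') = c *\<^sub>R Nm D x'"
proof -
  assume D: "D \<in> P (Suc (Suc 0))"
  have "Nm D 0 = 0" using Nm_lin[OF D, of 0 1 0] by simp
  then show ?thesis using Nm_lin[OF D, of 0 c x'] by simp
qed

lemma Lm_lin: assumes D: "D \<in> P (Suc (Suc 0))" shows "Lm D (w1 + c *\<^sub>R w2) = Lm D w1 + c *\<^sub>R Lm D w2"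
  unfolding Lm_def using Phi2_linw[OF D] by simp

lemma Lm_deriv: assumes D: "D \<in> P (Suc (Suc 0))" shows "Lm D (b x y) = b (Nm D x) y - b (Nm D y) x"
  unfolding Lm_def using Phi2_b[OF D, of x y] D2_val[OF D] by simp

definition nn where "nn D a c = ip (Nm D a) c"
definition pp where "pp D a c = nn D a c + nn D c a"

context
  fixes D assumes D: "D \<in> P (Suc (Suc 0))"
begin

lemma nn_add1: "nn D (a + a') c = nn D a c + nn D a' c" unfolding nn_def by (simp add: Nm_add[OF D] ip_add1)
lemma nn_add2: "nn D c (a + a') = nn D c a + nn D c a'" unfolding nn_def by (simp add: ip_add2)
lemma nn_sc1: "nn D (r *\<^sub>R a) c = r * nn D a c" unfolding nn_def by (simp add: Nm_sc[OF D] ip_sc1)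
lemma nn_sc2: "nn D c (r *\<^sub>R a) = r * nn D c a" unfolding nn_def by (simp add: ip_sc2)
lemma nn_neg1: "nn D (- a) c = - nn D a c" using nn_sc1[of "-1" a c] by simp
lemma nn_neg2: "nn D c (- a) = - nn D c a" using nn_sc2[of c "-1" a] by simp
lemma nn_02: "nn D c 0 = 0" using nn_sc2[of c 0 0] by simp
lemma nn_01: "nn D 0 c = 0" using nn_sc1[of 0 0 c] by simp
lemma pp_sym: "pp D a c = pp D c a" unfolding pp_def by simp
lemma pp_neg: "pp D (- a) (- c) = pp D a c" unfolding pp_def by (simp add: nn_neg1 nn_neg2)
lemma pp_add2: "pp D c (a + a') = pp D c a + pp D c a'" unfolding pp_def by (simp add: nn_add1 nn_add2)
lemma pp_sc2: "pp D c (r *\<^sub>R a) = r * pp D c a" unfolding pp_def by (simp add: nn_sc1 nn_sc2 algebra_simps)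

lemma beta: "wp z (Lm D (b x y)) = nn D y (J z x) - nn D x (J z y)"
  unfolding Lm_deriv[OF D] nn_def
  by (simp add: wp_sub2 J_char[symmetric] J_skew)

lemma G: assumes z: "z \<in> Zs"
  shows "2 * kap * ip x y * wp z' (Lm D z) =
     (nn D y (J z' (J z x)) - nn D (J z x) (J z' y)) - (nn D (J z y) (J z' x) - nn D x (J z' (J z y)))"
proof -
  have "Lm D (b (J z x) y) - Lm D (b x (J z y)) = Lm D (b (J z x) y - b x (J z y))"
    using Lm_lin[OF D, of "b (J z x) y" "-1" "b x (J z y)"] by simp
  also have "\<dots> = (2 * kap * ip x y) *\<^sub>R Lm D z" unfolding Cid[OF z]
    using Lm_lin[OF D, of 0 "2 * kap * ip x y" z] Lm_lin[OF D, of 0 1 0] by simp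
  finally have e: "Lm D (b (J z x) y) - Lm D (b x (J z y)) = (2 * kap * ip x y) *\<^sub>R Lm D z" .
  have "wp z' (Lm D (b (J z x) y)) - wp z' (Lm D (b x (J z y))) = 2 * kap * ip x y * wp z' (Lm D z)"
    using arg_cong[OF e, of "wp z'"] by (simp add: wp_sub2 wp_sc2)
  then show ?thesis unfolding beta by simp
qed

definition lam where "lam z = wp z (Lm D z)"

lemma D1: assumes z: "z \<in> Zs"
  shows "pp D (J z x) (J z y) = sig z * pp D x y - 2 * kap * ip x y * lam z"
  using G[OF z, of x y z] JJ[OF z] unfolding lam_def pp_def by (simp add: nn_sc2 algebra_simps)

lemma ratio: assumes z: "z \<in> Zs" and z': "z' \<in> Zs" and ne: "z \<noteq> z'"
  shows "sig z * lam z = sig z' * lam z'"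
proof -
  obtain x where x: "ip x x \<noteq> 0" using nonnull by blast
  have s: "ip (J w x) (J w x) = - sig w * ip x x" if "w \<in> Zs" for w
    using J_skew[of w x "J w x"] JJ[OF that] by (simp add: ip_sc2)
  have A: "pp D (J z (J z' x)) (J z (J z' x)) = sig z * (sig z' * pp D x x - 2 * kap * ip x x * lam z') - 2 * kap * (- sig z' * ip x x) * lam z"
    using D1[OF z, of "J z' x" "J z' x"] D1[OF z', of x x] s[OF z'] by simp
  have B: "pp D (J z' (J z x)) (J z' (J z x)) = sig z' * (sig z * pp D x x - 2 * kap * ip x x * lam z) - 2 * kap * (- sig z * ip x x) * lam z'"
    using D1[OF z', of "J z x" "J z x"] D1[OF z, of x x] s[OF z] by simp
  have "pp D (J z (J z' x)) (J z (J z' x)) = pp D (J z' (J z x)) (J z' (J z x))"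
    using anticomm[OF z z' ne, of x] pp_neg by simp
  then have "4 * kap * ip x x * (sig z' * lam z - sig z * lam z') = 0"
    using A B by (simp add: algebra_simps)
  then have e: "sig z' * lam z = sig z * lam z'" using x kap_pm by auto
  have "sig z * lam z = sig z * sig z' * (sig z' * lam z)" using sig_sq[of z'] by (simp add: algebra_simps)
  also have "\<dots> = sig z' * lam z' * (sig z * sig z)" using e by (simp add: algebra_simps)
  finally show ?thesis using sig_sq[of z] by simp
qed

lemma cross: assumes z: "z \<in> Zs" and z': "z' \<in> Zs" and ne: "z \<noteq> z'"
  shows "wp z' (Lm D z) + wp z (Lm D z') = 0"
proof -
  obtain x where x: "ip x x \<noteq> 0" using nonnull by blast
  have ac: "J z' (J z y) = - J z (J z' y)" for y using anticomm[OF z z' ne, of y] by simp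
  have sum: "2 * kap * ip x x * (wp z' (Lm D z) + wp z (Lm D z')) =
      - (pp D (J z x) (J z' x) + pp D (J z' x) (J z x))"
    using G[OF z, of x x z'] G[OF z', of x x z] ac unfolding pp_def
    by (simp add: algebra_simps nn_neg2)
  have t1: "J z (sig z *\<^sub>R J z (J z' x)) = J z' x" using JJ[OF z] sig_sq[of z] by (simp add: J_sc2)
  have t2: "J z' (sig z' *\<^sub>R J z' (J z x)) = J z x" using JJ[OF z'] sig_sq[of z'] by (simp add: J_sc2)
  have p1: "pp D (J z x) (J z' x) = pp D x (J z (J z' x)) - 2 * kap * sig z * lam z * ip x (J z (J z' x))"
    using D1[OF z, of x "sig z *\<^sub>R J z (J z' x)"] t1 sig_sq[of z]
    by (simp add: pp_sc2 ip_sc2 algebra_simps)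
  have p2: "pp D (J z' x) (J z x) = pp D x (J z' (J z x)) - 2 * kap * sig z' * lam z' * ip x (J z' (J z x))"
    using D1[OF z', of x "sig z' *\<^sub>R J z' (J z x)"] t2 sig_sq[of z']
    by (simp add: pp_sc2 ip_sc2 algebra_simps)
  have "pp D (J z x) (J z' x) + pp D (J z' x) (J z x) =
      pp D x (J z (J z' x)) + pp D x (- J z (J z' x)) - 2 * kap * (sig z * lam z - sig z' * lam z') * ip x (J z (J z' x))"
    using p1 p2 ac[of x] by (simp add: ip_neg2 algebra_simps)
  also have "\<dots> = 0" using ratio[OF z z' ne] pp_add2[of x "J z (J z' x)" "- J z (J z' x)"] by (simp add: pp_def nn_02 nn_01)
  finally have "2 * kap * ip x x * (wp z' (Lm D z) + wp z (Lm D z')) = 0" using sum by simp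
  then show ?thesis using x kap_pm by auto
qed

lemma co: "\<exists>mu. \<forall>z\<in>Zs. \<forall>z'\<in>Zs. wp (Lm D z) z' + wp z (Lm D z') = 2 * mu * wp z z'"
proof (intro exI ballI)
  fix z z' assume z: "z \<in> Zs" and z': "z' \<in> Zs"
  define mu where "mu = kap * sig z0 * lam z0"
  show "wp (Lm D z) z' + wp z (Lm D z') = 2 * mu * wp z z'"
  proof (cases "z = z'")
    case True
    have sl: "sig z * lam z = sig z0 * lam z0"
      using ratio[OF z z0] by (cases "z = z0") auto
    have ep: "eps z = kap * sig z" using kap[OF z] sig_sq[of z] by (metis mult.assoc mult.commute mult.right_neutral)
    have "lam z = sig z * (sig z * lam z)" using sig_sq[of z] by (simp add: algebra_simps)
    also have "\<dots> = mu * eps z" unfolding mu_def ep using sl kap_pm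
      by (auto simp: algebra_simps)
    finally have c: "lam z = mu * eps z" .
    have l2: "wp (Lm D z) z = lam z" unfolding lam_def by (rule wp_sym)
    show ?thesis unfolding True[symmetric] using l2 c unfolding lam_def eps_def by simp
  next
    case False
    then show ?thesis using cross[OF z' z] Zs_orth[OF z z' False] by (simp add: wp_sym[of "Lm D z"])
  qed
qed

end
end


lemma move_lemma:
  fixes G H :: "'a \<Rightarrow> 'a \<Rightarrow> 'a \<Rightarrow> real"
  assumes G12: "\<And>a c e. G a c e = G c a e" and G23: "\<And>a c e. G a c e = G a e c"
    and H23: "\<And>a c e. H a c e = H a e c" and HG: "\<And>a c e. H a c e = G a c (M e)"
  shows "G a (M c) e = G a c (M e)" "G (M a) c e = G a c (M e)" "G (M a) c e = G a (M c) e"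
proof -
  show m23: "G a (M c) e = G a c (M e)" for a c e
    using HG[of a c e] H23[of a c e] HG[of a e c] G23[of a e "M c"] by simp
  show m13: "G (M a) c e = G a c (M e)" for a c e
    using G12[of "M a" c e] m23[of c a e] G12[of c a "M e"] by simp
  show "G (M a) c e = G a (M c) e" using m13 m23 by simp
qed

lemma anti_lemma:
  fixes G Ha Hb :: "'a::real_vector \<Rightarrow> 'a \<Rightarrow> 'a \<Rightarrow> real"
  assumes G12: "\<And>a c e. G a c e = G c a e" and G23: "\<And>a c e. G a c e = G a e c"
    and Ha23: "\<And>a c e. Ha a c e = Ha a e c" and HaG: "\<And>a c e. Ha a c e = G a c (Ma e)"
    and Hb23: "\<And>a c e. Hb a c e = Hb a e c" and HbG: "\<And>a c e. Hb a c e = G a c (Mb e)"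
    and Gneg: "\<And>a c e. G a c (- e) = - G a c e"
    and ac: "\<And>u. Mb (Ma u) = - Ma (Mb u)"
  shows "G x y (Ma (Mb u)) = 0"
proof -
  note A = move_lemma[where G=G and H=Ha and M=Ma, OF G12 G23 Ha23 HaG] and B = move_lemma[where G=G and H=Hb and M=Mb, OF G12 G23 Hb23 HbG]
  have wA: "G (Ma (Mb x)) y u = G x y (Mb (Ma u))" using A(2)[of "Mb x" y u] B(2)[of x y "Ma u"] by simp
  have wB: "G (Ma (Mb x)) y u = G x y (Ma (Mb u))"
    using A(3)[of "Mb x" y u] B(2)[of x "Ma y" u] A(1)[of x y "Mb u"] by simp
  have "G x y (Ma (Mb u)) = - G x y (Ma (Mb u))" using wA wB ac[of u] Gneg by simp
  then show ?thesis by simp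
qed

context PJ3 begin

lemma three: obtains z1 z2 z3 where "z1 \<in> Zs" "z2 \<in> Zs" "z3 \<in> Zs" "z1 \<noteq> z2" "z1 \<noteq> z3" "z2 \<noteq> z3"
proof -
  have "3 \<le> card Zs" by (rule Zs_card)
  then obtain S where "S \<subseteq> Zs" "card S = 3" by (meson obtain_subset_with_card_n)
  then show ?thesis using that by (auto simp: card_3_iff)
qed

lemma h1: assumes B: "B \<in> P (Suc (Suc (Suc 0)))" and z: "\<And>w. Phi2 B w = (\<lambda>_. 0)"
  shows "B = (\<lambda>_. 0)"
proof -
  define R where "R y u = Nm (xact B y) u" for y u
  have Dy: "xact B y \<in> P (Suc (Suc 0))" for y using PSS(2)[OF B] .
  have symx: "xact (xact B y) u = xact (xact B u) y" for y u
  proof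
    fix ys
    have "Phi2 B (b y u) ys = 0" using z by simp
    then show "xact (xact B y) u ys = xact (xact B u) y ys"
      using Phi2_b[OF B, of y u] unfolding xact_def by simp
  qed
  have Rsym: "R y u = R u y" for y u unfolding R_def Nm_def using symx by simp
  have L0: "Lm (xact B y) w = 0" for y w
    unfolding Lm_def using E2[OF B, of y w] z unfolding xact_def by simp
  have der: "b (R y x) x' = b (R y x') x" for y x x'
    using Lm_deriv[OF Dy, of y x x'] L0 unfolding R_def by simp
  define Gz where "Gz z a c e = ip (J z (R a c)) e" for z a c e
  have G12: "Gz z a c e = Gz z c a e" for z a c e unfolding Gz_def using Rsym by simp
  have G23: "Gz z a c e = Gz z a e c" for z a c e unfolding Gz_def J_char using der by simp
  have Gneg: "Gz z a c (- e) = - Gz z a c e" for z a c e unfolding Gz_def by (simp add: ip_neg2)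
  have HG: "Gz z' a c e = Gz z a c (sig z *\<^sub>R J z (J z' e))" if zz: "z \<in> Zs" for z z' a c e
  proof -
    have "ip (J z (R a c)) (sig z *\<^sub>R J z (J z' e)) = - sig z * ip (R a c) (J z (J z (J z' e)))"
      by (simp add: ip_sc2 J_skew)
    also have "\<dots> = - ip (R a c) (J z' e)" using JJ[OF zz] sig_sq[of z] by (simp add: ip_sc2)
    also have "\<dots> = ip (J z' (R a c)) e" by (simp add: J_skew)
    finally show ?thesis unfolding Gz_def by simp
  qed
  obtain z1 z2 z3 where zs: "z1 \<in> Zs" "z2 \<in> Zs" "z3 \<in> Zs" "z1 \<noteq> z2" "z1 \<noteq> z3" "z2 \<noteq> z3" by (rule three)
  define M1 where "M1 e = sig z1 *\<^sub>R J z1 (J z2 e)" for e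
  define M2 where "M2 e = sig z1 *\<^sub>R J z1 (J z3 e)" for e
  have ac: "M2 (M1 u) = - M1 (M2 u)" for u
  proof -
    have a12: "J z2 (J z1 v) = - J z1 (J z2 v)" for v using anticomm[OF zs(2) zs(1)] zs(4) by auto
    have a13: "J z3 (J z1 v) = - J z1 (J z3 v)" for v using anticomm[OF zs(3) zs(1)] zs(5) by auto
    have a23: "J z3 (J z2 v) = - J z2 (J z3 v)" for v using anticomm[OF zs(3) zs(2)] zs(6) by auto
    have "M2 (M1 u) = sig z1 *\<^sub>R sig z1 *\<^sub>R J z1 (J z3 (J z1 (J z2 u)))"
      unfolding M1_def M2_def by (simp add: J_sc2)
    also have "\<dots> = - J z1 (J z1 (J z3 (J z2 u)))"
      using sig_sq[of z1] a13 by (simp add: J_neg2)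
    also have "\<dots> = - (sig z1 *\<^sub>R (J z3 (J z2 u)))" using JJ[OF zs(1)] by simp
    also have "\<dots> = sig z1 *\<^sub>R J z2 (J z3 u)" using a23 by simp
    finally have l: "M2 (M1 u) = sig z1 *\<^sub>R J z2 (J z3 u)" .
    have "M1 (M2 u) = sig z1 *\<^sub>R sig z1 *\<^sub>R J z1 (J z2 (J z1 (J z3 u)))"
      unfolding M1_def M2_def by (simp add: J_sc2)
    also have "\<dots> = - J z1 (J z1 (J z2 (J z3 u)))"
      using sig_sq[of z1] a12 by (simp add: J_neg2)
    also have "\<dots> = - (sig z1 *\<^sub>R (J z2 (J z3 u)))" using JJ[OF zs(1)] by simp
    finally show ?thesis using l by simp
  qed
  have HGa: "Gz z2 a c e = Gz z1 a c (M1 e)" for a c e unfolding M1_def by (rule HG[OF zs(1)])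
  have HGb: "Gz z3 a c e = Gz z1 a c (M2 e)" for a c e unfolding M2_def by (rule HG[OF zs(1)])
  have G0: "Gz z1 x y (M1 (M2 u)) = 0" for x y u
    by (rule anti_lemma[where G="Gz z1" and Ha="Gz z2" and Hb="Gz z3" and Ma=M1 and Mb=M2,
          OF G12 G23 G23 HGa G23 HGb Gneg ac])
  have "R x y = 0" for x y
  proof -
    have "ip (J z1 (R x y)) e = 0" for e
    proof -
      have me: "M1 (M2 (J z3 (J z2 e))) = - (sig z1 * sig z2 * sig z3) *\<^sub>R e"
      proof -
        have a23: "J z3 (J z2 v) = - J z2 (J z3 v)" for v using anticomm[OF zs(3) zs(2)] zs(6) by auto
        have "M1 (M2 (J z3 (J z2 e))) = sig z1 *\<^sub>R sig z1 *\<^sub>R J z1 (J z2 (J z1 (J z3 (J z3 (J z2 e)))))"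
          unfolding M1_def M2_def by (simp add: J_sc2)
        also have "\<dots> = J z1 (J z2 (J z1 (sig z3 *\<^sub>R J z2 e)))" using sig_sq[of z1] JJ[OF zs(3)] by simp
        also have "\<dots> = sig z3 *\<^sub>R J z1 (J z2 (J z1 (J z2 e)))" by (simp add: J_sc2)
        also have "J z2 (J z1 (J z2 e)) = - J z1 (J z2 (J z2 e))"
          using anticomm[OF zs(2) zs(1)] zs(4) by auto
        also have "\<dots> = - (sig z2 *\<^sub>R J z1 e)" using JJ[OF zs(2)] by (simp add: J_sc2)
        finally show ?thesis using JJ[OF zs(1)] by (simp add: J_sc2 J_neg2)
      qed
      have "Gz z1 x y (- (sig z1 * sig z2 * sig z3) *\<^sub>R e) = 0" using G0[of x y "J z3 (J z2 e)"] unfolding me .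
      then have "(sig z1 * sig z2 * sig z3) * ip (J z1 (R x y)) e = 0"
        unfolding Gz_def by (simp add: ip_sc2 ip_neg2)
      moreover have "sig z1 * sig z2 * sig z3 \<noteq> 0" using sig_pm[of z1] sig_pm[of z2] sig_pm[of z3] by auto
      ultimately show ?thesis by simp
    qed
    then have "J z1 (R x y) = 0" by (rule ip_nd)
    then have "J z1 (J z1 (R x y)) = 0" by simp
    then show ?thesis using JJ[OF zs(1)] sig_pm[of z1] by auto
  qed
  then have "xact (xact B y) u = (\<lambda>_. 0)" for y u
    using vec[OF PSS(2)[OF Dy[of y]], of u] v1_zero unfolding R_def Nm_def by simp
  then have "xact B y = (\<lambda>_. 0)" for y using zero_of_xact[OF Dy] by blast
  then show ?thesis using zero_of_xact[OF B] by blast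
qed

end


context PJ3 begin

lemma co2:
  fixes Q :: "'w \<Rightarrow> 'w \<Rightarrow> 'w \<Rightarrow> 'w"
  assumes S12: "\<And>a c d. Q a c d = Q c a d" and S23: "\<And>a c d. Q a c d = Q a d c"
    and lin: "\<And>a c. linear (Q a c)"
    and co: "\<And>a c. \<exists>mu. \<forall>d\<in>Zs. \<forall>e\<in>Zs. wp (Q a c d) e + wp d (Q a c e) = 2 * mu * wp d e"
  shows "Q a c d = 0"
proof -
  define phi where "phi a c = (SOME mu. \<forall>d\<in>Zs. \<forall>e\<in>Zs. wp (Q a c d) e + wp d (Q a c e) = 2 * mu * wp d e)" for a c
  have phi: "wp (Q a c d) e + wp (Q a c e) d = 2 * phi a c * wp d e" if "d \<in> Zs" "e \<in> Zs" for a c d e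
  proof -
    have "\<forall>d\<in>Zs. \<forall>e\<in>Zs. wp (Q a c d) e + wp d (Q a c e) = 2 * phi a c * wp d e"
      unfolding phi_def by (rule someI_ex[OF co])
    then have h: "wp (Q a c d) e + wp d (Q a c e) = 2 * phi a c * wp d e" using that by blast
    show ?thesis using h wp_sym[of d "Q a c e"] by simp
  qed
  define Cf where "Cf a c d e = wp (Q a c d) e" for a c d e
  have fm: "Cf a c d e = phi a c * wp d e - phi a e * wp c d + phi a d * wp e c"
    if "c \<in> Zs" "d \<in> Zs" "e \<in> Zs" for a c d e
  proof -
    have 1: "Cf a c d e + Cf a c e d = 2 * phi a c * wp d e" unfolding Cf_def using phi that by simp
    have 2: "Cf a e c d + Cf a e d c = 2 * phi a e * wp c d" unfolding Cf_def using phi that by simp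
    have 3: "Cf a d e c + Cf a d c e = 2 * phi a d * wp e c" unfolding Cf_def using phi that by simp
    have s1: "Cf a c e d = Cf a e c d" unfolding Cf_def using S23[of a c e] by simp
    have s2: "Cf a e d c = Cf a d e c" unfolding Cf_def using S23[of a e d] by simp
    have s3: "Cf a d c e = Cf a c d e" unfolding Cf_def using S23[of a d c] by simp
    show ?thesis using 1 2 3 s1 s2 s3 by (simp add: algebra_simps)
  qed
  have ep: "wp r r = eps r" for r unfolding eps_def ..
  have off: "phi q p = 0" if "p \<in> Zs" "q \<in> Zs" "p \<noteq> q" for p q
  proof -
    have "\<not> Zs \<subseteq> {p, q}"
    proof
      assume "Zs \<subseteq> {p, q}"
      then have "card Zs \<le> card {p, q}" by (rule card_mono[rotated]) simp
      moreover have "card {p, q} \<le> 2" by (cases "p = q") auto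
      ultimately show False using Zs_card by simp
    qed
    then obtain r where r: "r \<in> Zs" "r \<noteq> p" "r \<noteq> q" by blast
    have a: "Cf q p r r = phi q p * eps r"
      using fm[of p r r q] that r by (simp add: ep wp_sym[of r p])
    have b: "Cf r p q r = 0"
      using fm[of p q r r] that r Zs_orth by (simp add: wp_sym[of r])
    have "Q q p r = Q r p q" using S12[of q p r] S23[of p q r] S12[of p r q] by simp
    then have "phi q p * eps r = 0" using a b unfolding Cf_def by simp
    then show ?thesis using eps_pm[OF r(1)] by auto
  qed
  have dg: "phi p p * eps r = - phi r r * eps p" if "p \<in> Zs" "r \<in> Zs" "p \<noteq> r" for p r
  proof -
    have a: "Cf p r p r = phi p p * eps r"
      using fm[of r p r p] that by (simp add: ep wp_sym[of r p])
    have b: "Cf r p p r = - phi r r * eps p"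
      using fm[of p p r r] that Zs_orth off by (simp add: ep wp_sym[of r p])
    have "Q p r p = Q r p p" using S12[of p r p] by simp
    then show ?thesis using a b unfolding Cf_def by simp
  qed
  have diag: "phi p p = 0" if p: "p \<in> Zs" for p
  proof -
    have "card (Zs - {p}) \<ge> 2" using Zs_card Zs_fin p by simp
    then obtain S where "S \<subseteq> Zs - {p}" "card S = 2" by (meson obtain_subset_with_card_n)
    then obtain r t where rt: "r \<in> Zs" "t \<in> Zs" "r \<noteq> p" "t \<noteq> p" "r \<noteq> t" by (auto simp: card_2_iff)
    have e1: "phi p p * eps r = - phi r r * eps p" using dg[OF p rt(1)] rt by simp
    have e2: "phi p p * eps t = - phi t t * eps p" using dg[OF p rt(2)] rt by simp
    have e3: "phi r r * eps t = - phi t t * eps r" using dg[OF rt(1) rt(2) rt(5)] .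
    show ?thesis using eps_pm[OF p] eps_pm[OF rt(1)] eps_pm[OF rt(2)] e1 e2 e3
      by (elim disjE) (auto simp: algebra_simps)
  qed
  have phi0: "phi p q = 0" if "p \<in> Zs" "q \<in> Zs" for p q
    using off[of q p] diag[of p] that by (cases "p = q") auto
  have Q0: "Q a c d = 0" if "a \<in> Zs" "c \<in> Zs" "d \<in> Zs" for a c d
  proof (rule wp_nd_Z)
    fix e assume e: "e \<in> Zs"
    have "Cf a c d e = 0" using fm[of c d e a] that e phi0 by simp
    then show "wp e (Q a c d) = 0" unfolding Cf_def by (simp add: wp_sym[of e])
  qed
  have Q1: "Q a c d = 0" if "a \<in> Zs" "c \<in> Zs" for a c d
    using lin0_Zs[OF lin[of a c]] Q0 that by blast
  have Q2: "Q a c d = 0" if "a \<in> Zs" for a c d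
  proof -
    have "Q a c e = 0" if "e \<in> Zs" for e using Q1[OF \<open>a \<in> Zs\<close> that, of c] S23[of a c e] by simp
    then show ?thesis using lin0_Zs[OF lin[of a c]] by blast
  qed
  have "Q c' d' a' = 0" if "a' \<in> Zs" for c' d' a'
    using Q2[OF that, of c' d'] S23[of c' d' a'] S12[of c' a' d'] by simp
  then show ?thesis using lin0_Zs[OF lin[of a c]] by blast
qed

lemma hlem: "T \<in> P (Suc (Suc (Suc k))) \<Longrightarrow> (\<And>w. Phi2 T w = (\<lambda>_. 0)) \<Longrightarrow> T = (\<lambda>_. 0)"
proof (induction k arbitrary: T)
  case 0 then show ?case using h1 by blast
next
  case (Suc k)
  have "xact T x = (\<lambda>_. 0)" for x
  proof (rule Suc.IH)
    show "xact T x \<in> P (Suc (Suc (Suc k)))" using PSS(2)[OF Suc.prems(1)] .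
    fix w show "Phi2 (xact T x) w = (\<lambda>_. 0)"
      using E2[OF Suc.prems(1), of x w] Suc.prems(2) unfolding xact_def by simp
  qed
  then show ?case using zero_of_xact[OF Suc.prems(1)] by blast
qed

lemma P7: assumes A7: "A \<in> P 7" shows "A = (\<lambda>_. 0)"
proof -
  have "(7::nat) = Suc (Suc (Suc (Suc (Suc (Suc (Suc 0))))))" by simp
  then have A: "A \<in> P (Suc (Suc (Suc (Suc (Suc (Suc (Suc 0)))))))" using A7 by (simp only:)
  have A6: "xact A x \<in> P (Suc (Suc (Suc (Suc (Suc (Suc 0))))))" for x using PSS(2)[OF A] .
  have A4: "Phi2 (xact A x) w1 \<in> P (Suc (Suc (Suc (Suc 0))))" for x w1 using PSS(5)[OF A6] .
  have A2: "Phi2 (Phi2 (xact A x) w1) w2 \<in> P (Suc (Suc 0))" for x w1 w2 using PSS(5)[OF A4] .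
  have Y: "Phi2 A w1 \<in> P (Suc (Suc (Suc (Suc (Suc 0)))))" for w1 using PSS(5)[OF A] .
  have Z: "Phi2 (Phi2 A w1) w2 \<in> P (Suc (Suc (Suc 0)))" for w1 w2 using PSS(5)[OF Y] .
  have V: "Phi2 (Phi2 (Phi2 A w1) w2) w3 \<in> P (Suc 0)" for w1 w2 w3 using PSS(5)[OF Z] .
  have Q0: "Lm (Phi2 (Phi2 (xact A x) w1) w2) w3 = 0" for x w1 w2 w3
  proof -
    define Q where "Q w1 w2 w3 = Lm (Phi2 (Phi2 (xact A x) w1) w2) w3" for w1 w2 w3
    have "Q w1 w2 w3 = 0"
    proof (rule co2[where Q=Q])
      fix a c d show "Q a c d = Q c a d" unfolding Q_def using E3[OF A6] by simp
    next
      fix a c d show "Q a c d = Q a d c" unfolding Q_def Lm_def using E3[OF A4] by simp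
    next
      fix a c show "linear (Q a c)" unfolding Q_def
      proof (rule linearI)
        fix w1 w2 show "Lm (Phi2 (Phi2 (xact A x) a) c) (w1 + w2) = Lm (Phi2 (Phi2 (xact A x) a) c) w1 + Lm (Phi2 (Phi2 (xact A x) a) c) w2"
          using Lm_lin[OF A2, of x a c w1 1 w2] by simp
      next
        fix r w show "Lm (Phi2 (Phi2 (xact A x) a) c) (r *\<^sub>R w) = r *\<^sub>R Lm (Phi2 (Phi2 (xact A x) a) c) w"
          using Lm_lin[OF A2, of x a c 0 r w] Lm_lin[OF A2, of x a c 0 1 0] by simp
      qed
    next
      fix a c show "\<exists>mu. \<forall>d\<in>Zs. \<forall>e\<in>Zs. wp (Q a c d) e + wp d (Q a c e) = 2 * mu * wp d e"
        unfolding Q_def by (rule co[OF A2])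
    qed
    then show ?thesis unfolding Q_def .
  qed
  have V0: "Phi2 (Phi2 (Phi2 A w1) w2) w3 = (\<lambda>_. 0)" for w1 w2 w3
  proof -
    have "Phi2 (Phi2 (Phi2 A w1) w2) w3 [x] = 0" for x
    proof -
      have "Phi2 (xact A x) w1 = xact (Phi2 A w1) x" using E2[OF A] .
      moreover have "Phi2 (xact (Phi2 A w1) x) w2 = xact (Phi2 (Phi2 A w1) w2) x" using E2[OF Y] .
      moreover have "Phi2 (xact (Phi2 (Phi2 A w1) w2) x) w3 = xact (Phi2 (Phi2 (Phi2 A w1) w2) w3) x" using E2[OF Z] .
      ultimately show ?thesis using Q0[of x w1 w2 w3] unfolding Lm_def xact_def by simp
    qed
    moreover define F where "F = Phi2 (Phi2 (Phi2 A w1) w2) w3"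
    ultimately have F0: "F [x] = 0" for x by simp
    have Fv: "F = v1 (vec F)" unfolding F_def using vec[OF V] .
    have "b (vec F) x = 0" for x
    proof -
      have "b (vec F) x = v1 (vec F) [x]" by (simp add: v1_def)
      also have "v1 (vec F) [x] = F [x]" by (subst Fv[symmetric]) (rule refl)
      finally show ?thesis using F0 by simp
    qed
    then have v0: "vec F = 0" by (rule bcf)
    have "F = v1 (vec F)" by (rule Fv)
    also have "\<dots> = v1 0" using v0 by simp
    also have "\<dots> = (\<lambda>_. 0)" by (rule v1_zero)
    finally show ?thesis unfolding F_def .
  qed
  have "Phi2 (Phi2 A w1) w2 = (\<lambda>_. 0)" for w1 w2 using hlem[OF Z V0] .
  then have "Phi2 A w1 = (\<lambda>_. 0)" for w1 using hlem[OF Y] by blast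
  then show ?thesis using hlem[OF A] by blast
qed

lemma Pbig: "m \<ge> 7 \<Longrightarrow> T \<in> P m \<Longrightarrow> T = (\<lambda>_. 0)"
proof (induction m arbitrary: T rule: dec_induct)
  case base
  then show ?case using P7 by blast
next
  case (step m)
  have "m = Suc (m - 1)" using step.hyps by simp
  then have T: "T \<in> P (Suc m)" using step.prems by simp
  have "xact T y = (\<lambda>_. 0)" for y using step.IH[OF PS(2)[OF T]] .
  then show ?case using zero_of_xact[OF T] by blast
qed

end


context PJ begin

definition Es :: "nat \<Rightarrow> 'v list set" where "Es m = {es. set es \<subseteq> Basis \<and> length es = m}"

lemma Es_fin: "finite (Es m)" unfolding Es_def by (rule finite_lists_length_eq) simp

lemma Es_Suc: "Es (Suc m) = (\<lambda>(e, es). e # es) ` (Basis \<times> Es m)"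
proof (intro set_eqI iffI)
  fix xs assume "xs \<in> Es (Suc m)"
  then obtain e es where "xs = e # es" "e \<in> Basis" "es \<in> Es m" unfolding Es_def by (cases xs) auto
  then show "xs \<in> (\<lambda>(e, es). e # es) ` (Basis \<times> Es m)" by force
qed (auto simp: Es_def)

lemma Es_0: "Es 0 = {[]}" unfolding Es_def by auto

lemma vlin_expand: assumes lf: "linear (f :: 'v \<Rightarrow> 'w)" shows "f y = (\<Sum>e\<in>Basis. (y \<bullet> e) *\<^sub>R f e)"
proof -
  have "f y = f (\<Sum>e\<in>Basis. (y \<bullet> e) *\<^sub>R e)" by (simp add: euclidean_representation)
  also have "\<dots> = (\<Sum>e\<in>Basis. f ((y \<bullet> e) *\<^sub>R e))" by (rule linear_sum[OF lf])
  also have "\<dots> = (\<Sum>e\<in>Basis. (y \<bullet> e) *\<^sub>R f e)" by (simp add: linear_scale[OF lf])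
  finally show ?thesis .
qed

lemma expand: "T \<in> P m \<Longrightarrow> T ys = (if length ys = m then (\<Sum>es\<in>Es m. (\<Prod>i<m. ys ! i \<bullet> es ! i) *\<^sub>R T es) else 0)"
proof (induction m arbitrary: T ys)
  case 0
  then show ?case using P0_iff[of T] by (cases ys) (auto simp: Es_0)
next
  case (Suc m)
  note T = Suc.prems
  show ?case
  proof (cases ys)
    case Nil then show ?thesis using PS(1)[OF T] by simp
  next
    case (Cons y ys')
    have xT: "xact T e \<in> P m" for e using PS(2)[OF T] .
    have IH: "T (e # zs) = (if length zs = m then (\<Sum>es\<in>Es m. (\<Prod>i<m. zs ! i \<bullet> es ! i) *\<^sub>R T (e # es)) else 0)" for e zs
      using Suc.IH[OF xT[of e], of zs] unfolding xact_def by simp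
    show ?thesis
    proof (cases "length ys' = m")
      case False then show ?thesis using IH Cons by simp
    next
      case True
      have "T ys = (\<Sum>e\<in>Basis. (y \<bullet> e) *\<^sub>R T (e # ys'))"
        unfolding Cons using vlin_expand[OF PS(3)[OF T, of ys'], of y] .
      also have "\<dots> = (\<Sum>e\<in>Basis. \<Sum>es\<in>Es m. ((y \<bullet> e) * (\<Prod>i<m. ys' ! i \<bullet> es ! i)) *\<^sub>R T (e # es))"
        using IH True by (simp add: scaleR_sum_right)
      also have "\<dots> = (\<Sum>(e, es)\<in>Basis \<times> Es m. ((y \<bullet> e) * (\<Prod>i<m. ys' ! i \<bullet> es ! i)) *\<^sub>R T (e # es))"
        by (rule sum.cartesian_product)
      also have "\<dots> = (\<Sum>xs\<in>Es (Suc m). (\<Prod>i<Suc m. ys ! i \<bullet> xs ! i) *\<^sub>R T xs)"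
      proof -
        have inj: "inj_on (\<lambda>(e, es). e # es) (Basis \<times> Es m)" by (auto simp: inj_on_def)
        show ?thesis unfolding Es_Suc sum.reindex[OF inj]
          by (rule sum.cong) (auto simp del: prod.lessThan_Suc simp add: Cons prod.lessThan_Suc_shift)
      qed
      finally show ?thesis using True Cons by simp
    qed
  qed
qed

definition beta :: "'v list \<Rightarrow> 'w \<Rightarrow> 'v list \<Rightarrow> 'w" where
  "beta es f = (\<lambda>ys. if length ys = length es then (\<Prod>i<length es. ys ! i \<bullet> es ! i) *\<^sub>R f else 0)"

definition Bs where "Bs = (\<lambda>(es, f). beta es f) ` ((\<Union>m\<le>6. Es m) \<times> Basis)"

lemma Bs_fin: "finite Bs" unfolding Bs_def using Es_fin by auto

definition Sp where "Sp = {T. \<exists>c. T = (\<lambda>ys. \<Sum>\<beta>\<in>Bs. c \<beta> *\<^sub>R \<beta> ys)}"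

lemma Sp_step: assumes "T1 \<in> Sp" "\<beta>0 \<in> Bs" shows "(\<lambda>ys. T1 ys + a *\<^sub>R \<beta>0 ys) \<in> Sp"
proof -
  obtain c where c: "T1 = (\<lambda>ys. \<Sum>\<beta>\<in>Bs. c \<beta> *\<^sub>R \<beta> ys)" using assms(1) unfolding Sp_def by blast
  define c' where "c' \<beta> = c \<beta> + (if \<beta> = \<beta>0 then a else 0)" for \<beta>
  have "(\<Sum>\<beta>\<in>Bs. c' \<beta> *\<^sub>R \<beta> ys) = T1 ys + a *\<^sub>R \<beta>0 ys" for ys
  proof -
    have e: "c' \<beta> *\<^sub>R \<beta> ys = c \<beta> *\<^sub>R \<beta> ys + (if \<beta> = \<beta>0 then a *\<^sub>R \<beta>0 ys else 0)" for \<beta>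
      unfolding c'_def by (simp add: scaleR_add_left)
    have "(\<Sum>\<beta>\<in>Bs. c' \<beta> *\<^sub>R \<beta> ys) = (\<Sum>\<beta>\<in>Bs. c \<beta> *\<^sub>R \<beta> ys) + (\<Sum>\<beta>\<in>Bs. (if \<beta> = \<beta>0 then a *\<^sub>R \<beta>0 ys else 0))"
      unfolding e by (rule sum.distrib)
    also have "(\<Sum>\<beta>\<in>Bs. (if \<beta> = \<beta>0 then a *\<^sub>R \<beta>0 ys else 0)) = a *\<^sub>R \<beta>0 ys"
      using assms(2) Bs_fin by (simp add: sum.delta')
    finally show ?thesis using c by simp
  qed
  then show ?thesis unfolding Sp_def by (intro CollectI exI[of _ c']) (simp add: fun_eq_iff)
qed

lemma Sp_sum: "finite I \<Longrightarrow> (\<And>i. i \<in> I \<Longrightarrow> g i \<in> Bs) \<Longrightarrow> (\<lambda>ys. \<Sum>i\<in>I. a i *\<^sub>R g i ys) \<in> Sp"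
proof (induction I rule: finite_induct)
  case empty
  have "(\<lambda>ys. \<Sum>i\<in>{}. a i *\<^sub>R g i ys) = (\<lambda>ys. \<Sum>\<beta>\<in>Bs. 0 *\<^sub>R \<beta> ys)" by simp
  then show ?case unfolding Sp_def by (intro CollectI exI[of _ "\<lambda>_. 0"])
next
  case (insert i I)
  have "(\<lambda>ys. (\<lambda>ys. \<Sum>i\<in>I. a i *\<^sub>R g i ys) ys + a i *\<^sub>R g i ys) \<in> Sp"
    using Sp_step[OF insert.IH insert.prems[of i]] insert.prems by simp
  then show ?case using insert.hyps by (simp add: add.commute)
qed

end

context PJ3 begin

lemma rigid_b: "rigid b"
  unfolding rigid_def
proof (rule exI[of _ Bs], intro conjI allI ballI)
  show "finite Bs" by (rule Bs_fin)
  fix m T assume T: "T \<in> tanaka_prol b m"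
  show "\<exists>c. T = (\<lambda>ys. \<Sum>\<beta>\<in>Bs. c \<beta> *\<^sub>R \<beta> ys)"
  proof (cases "m \<ge> 7")
    case True
    then have "T = (\<lambda>_. 0)" using Pbig T by blast
    then show ?thesis by (intro exI[of _ "\<lambda>_. 0"]) simp
  next
    case False
    have Teq: "T = (\<lambda>ys. \<Sum>(es, f)\<in>Es m \<times> Basis. (T es \<bullet> f) *\<^sub>R beta es f ys)"
    proof
      fix ys
      show "T ys = (\<Sum>(es, f)\<in>Es m \<times> Basis. (T es \<bullet> f) *\<^sub>R beta es f ys)"
      proof (cases "length ys = m")
        case True
        have "(\<Sum>(es, f)\<in>Es m \<times> Basis. (T es \<bullet> f) *\<^sub>R beta es f ys)
            = (\<Sum>es\<in>Es m. \<Sum>f\<in>Basis. (T es \<bullet> f) *\<^sub>R beta es f ys)"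
          by (rule sum.cartesian_product[symmetric])
        also have "\<dots> = (\<Sum>es\<in>Es m. (\<Prod>i<m. ys ! i \<bullet> es ! i) *\<^sub>R T es)"
        proof (rule sum.cong[OF refl])
          fix es assume "es \<in> Es m"
          then have l: "length es = m" unfolding Es_def by simp
          have "(\<Sum>f\<in>Basis. (T es \<bullet> f) *\<^sub>R beta es f ys) = (\<Prod>i<m. ys ! i \<bullet> es ! i) *\<^sub>R (\<Sum>f\<in>Basis. (T es \<bullet> f) *\<^sub>R f)"
            unfolding beta_def using l True by (simp add: scaleR_sum_right mult.commute)
          then show "(\<Sum>f\<in>Basis. (T es \<bullet> f) *\<^sub>R beta es f ys) = (\<Prod>i<m. ys ! i \<bullet> es ! i) *\<^sub>R T es"
            by (simp add: euclidean_representation)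
        qed
        also have "\<dots> = T ys" using expand[OF T, of ys] True by simp
        finally show ?thesis by simp
      next
        case False
        have "beta es f ys = 0" if "es \<in> Es m" for es f using that False unfolding beta_def Es_def by auto
        then show ?thesis using expand[OF T, of ys] False by (simp add: sum.cartesian_product[symmetric])
      qed
    qed
    have mem: "(\<lambda>ys. \<Sum>(es, f)\<in>Es m \<times> Basis. (T es \<bullet> f) *\<^sub>R beta es f ys) \<in> Sp"
    proof -
      have "(\<lambda>ys. \<Sum>i\<in>Es m \<times> Basis. (T (fst i) \<bullet> snd i) *\<^sub>R beta (fst i) (snd i) ys) \<in> Sp"
      proof (rule Sp_sum)
        show "finite (Es m \<times> Basis)" using Es_fin by simp
        fix i :: "'v list \<times> 'w" assume "i \<in> Es m \<times> Basis"
        then show "beta (fst i) (snd i) \<in> Bs" unfolding Bs_def using False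
          by (intro image_eqI[of _ _ "(fst i, snd i)"]) (auto intro!: bexI[of _ m])
      qed
      then show ?thesis by (simp add: case_prod_beta)
    qed
    then show ?thesis using Teq unfolding Sp_def by auto
  qed
qed

end

theorem theorem4p3:
  fixes b :: "'v::euclidean_space \<Rightarrow> 'v \<Rightarrow> 'w::euclidean_space"
    and Bf :: "'v \<times> 'w \<Rightarrow> 'v \<times> 'w \<Rightarrow> real"
  assumes "pseudo_Jtype b Bf"
    and "DIM('w) \<ge> 3"
    and "general_J2_condition b Bf"
  shows "rigid b"
proof -
  interpret PJ3 b Bf by unfold_locales (use assms in auto)
  show ?thesis by (rule rigid_b)
qed


end
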